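(* Let $\mathcal{H}$ be a complex Hilbert space and let $A\in\mathcal{B}(\mathcal{H})$ be a hyponormal operator, i.e. $A^*A-AA^*\ge 0$. Define \[ \xi_{|A|}=\inf_{\|x\|=1}\left\{\frac{\langle(|A|-|A^*|)x,x\rangle}{\langle(|A|+|A^*|)x,x\rangle}\right\}. \] Then for all $1\le r\le 2$, \[ \omega^r(A)\le \frac{1}{2\left(1+\frac{\xi_{|A|}^2}{8}\right)^r}\left\||A|^r+|A^*|^r\right\|. \] In particular, \[ \omega(A)\le \frac{1}{2\left(1+\frac{\xi_{|A|}^2}{8}\right)}\left\||A|+|A^*|\right\| \quad\text{and}\quad \omega^2(A)\le \frac{1}{2\left(1+\frac{\xi_{|A|}^2}{8}\right)^2}\left\|A^*A+AA^*\right\|. \]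
   Context: $\mathcal{B}(\mathcal{H})$ denotes the algebra of bounded linear operators on $\mathcal{H}$; $|A|=(A^*A)^{1/2}$; $\omega(A)=\sup_{\|x\|=1}|\langle Ax,x\rangle|$ is the numerical radius and $\|\cdot\|$ the operator norm. *)

theory Defs
  imports "HOL-Analysis.Analysis" "HOL-Computational_Algebra.Polynomial"
begin

class complex_vector = real_vector +
  fixes scaleC :: "complex \<Rightarrow> 'a \<Rightarrow> 'a"
  assumes scaleC_add_right: "scaleC a (x + y) = scaleC a x + scaleC a y"
    and scaleC_add_left: "scaleC (a + b) x = scaleC a x + scaleC b x"
    and scaleC_scaleC: "scaleC a (scaleC b x) = scaleC (a * b) x"
    and scaleC_one: "scaleC 1 x = x"
    and scaleR_scaleC: "scaleR r x = scaleC (complex_of_real r) x"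

class complex_inner = complex_vector + real_normed_vector +
  fixes cinner :: "'a \<Rightarrow> 'a \<Rightarrow> complex"
  assumes cinner_commute: "cinner x y = cnj (cinner y x)"
    and cinner_add_left: "cinner (x + y) z = cinner x z + cinner y z"
    and cinner_scaleC_left: "cinner (scaleC c x) y = cnj c * cinner x y"
    and cinner_ge_zero: "0 \<le> Re (cinner x x)"
    and cinner_eq_zero_iff: "cinner x x = 0 \<longleftrightarrow> x = 0"
    and norm_eq_sqrt_cinner: "norm x = sqrt (Re (cinner x x))"

class chilbert_space = complex_inner + complete_space

definition bounded_clinear_op :: "('a::complex_inner \<Rightarrow> 'a) \<Rightarrow> bool" where
  "bounded_clinear_op A \<longleftrightarrow>
     (\<forall>x y. A (x + y) = A x + A y) \<and> (\<forall>c x. A (scaleC c x) = scaleC c (A x)) \<and>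
     (\<exists>K. \<forall>x. norm (A x) \<le> norm x * K)"

definition adj :: "('a::complex_inner \<Rightarrow> 'a) \<Rightarrow> ('a \<Rightarrow> 'a)" where
  "adj A = (THE B. \<forall>x y. cinner (A x) y = cinner x (B y))"

definition pos_op :: "('a::complex_inner \<Rightarrow> 'a) \<Rightarrow> bool" where
  "pos_op T \<longleftrightarrow> (\<forall>x. Im (cinner (T x) x) = 0 \<and> 0 \<le> Re (cinner (T x) x))"

definition hyponormal :: "('a::complex_inner \<Rightarrow> 'a) \<Rightarrow> bool" where
  "hyponormal A \<longleftrightarrow> pos_op (\<lambda>x. adj A (A x) - A (adj A x))"

definition op_poly :: "real poly \<Rightarrow> ('a::complex_inner \<Rightarrow> 'a) \<Rightarrow> ('a \<Rightarrow> 'a)" where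
  "op_poly p T = (\<lambda>x. \<Sum>i\<le>degree p. scaleR (coeff p i) ((T ^^ i) x))"

text \<open>Real power \<open>T^r\<close> (r > 0) of a positive operator T, via the continuous functional
  calculus: the norm limit of \<open>p_n(T)\<close> for every sequence of real polynomials \<open>p_n\<close>
  converging uniformly to \<open>t \<mapsto> t^r\<close> on \<open>[0, \<parallel>T\<parallel>]\<close> (which contains the spectrum of T).\<close>
definition opow :: "('a::complex_inner \<Rightarrow> 'a) \<Rightarrow> real \<Rightarrow> ('a \<Rightarrow> 'a)" where
  "opow T r = (THE S. bounded_clinear_op S \<and>
     (\<forall>p :: nat \<Rightarrow> real poly.
        uniform_limit {0..onorm T} (\<lambda>n t. poly (p n) t) (\<lambda>t. t powr r) sequentially \<longrightarrow>
        (\<lambda>n. onorm (\<lambda>x. op_poly (p n) T x - S x)) \<longlonglongrightarrow> 0))"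

definition absop :: "('a::complex_inner \<Rightarrow> 'a) \<Rightarrow> ('a \<Rightarrow> 'a)" where
  "absop A = opow (\<lambda>x. adj A (A x)) (1/2)"

text \<open>Numerical radius \<open>\<omega>(A) = sup_{\<parallel>x\<parallel>=1} |\<langle>Ax,x\<rangle>|\<close> (the 0 only matters for the trivial space,
  where it makes the supremum over the empty unit sphere equal to 0).\<close>
definition numrad :: "('a::complex_inner \<Rightarrow> 'a) \<Rightarrow> real" where
  "numrad A = Sup ({0} \<union> {cmod (cinner (A x) x) | x. norm x = 1})"

definition xi_abs :: "('a::complex_inner \<Rightarrow> 'a) \<Rightarrow> real" where
  "xi_abs A = Inf {Re (cinner (absop A x - absop (adj A) x) x) /
                   Re (cinner (absop A x + absop (adj A) x) x) | x.
                   norm x = 1 \<and> Re (cinner (absop A x + absop (adj A) x) x) \<noteq> 0}"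

end

theory Submission
  imports Defs "HOL-Computational_Algebra.Fundamental_Theorem_Algebra"
begin

lemma scaleC_zero_right [simp]: "scaleC c 0 = 0"
proof -
  have "scaleC c 0 = scaleC c (0+0)" by simp
  also have "\<dots> = scaleC c 0 + scaleC c 0" by (rule scaleC_add_right)
  finally show ?thesis by simp
qed

lemma scaleC_zero_left [simp]: "scaleC 0 x = 0"
proof -
  have "scaleC 0 x = scaleC (0+0) x" by simp
  also have "\<dots> = scaleC 0 x + scaleC 0 x" by (rule scaleC_add_left)
  finally show ?thesis by simp
qed

lemma scaleC_minus_right: "scaleC c (- x) = - scaleC c x"
proof -
  have "scaleC c (- x) + scaleC c x = 0" by (simp flip: scaleC_add_right)
  then show ?thesis by (simp add: eq_neg_iff_add_eq_0)
qed

lemma scaleC_diff_right: "scaleC c (x - y) = scaleC c x - scaleC c y"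
  by (simp only: diff_conv_add_uminus scaleC_add_right scaleC_minus_right)

lemma scaleC_minus_left: "scaleC (- c) x = - scaleC c x"
proof -
  have "scaleC (- c) x + scaleC c x = 0" by (simp flip: scaleC_add_left)
  then show ?thesis by (simp add: eq_neg_iff_add_eq_0)
qed

lemma scaleC_diff_left: "scaleC (a - b) x = scaleC a x - scaleC b x"
  by (simp only: diff_conv_add_uminus scaleC_add_left scaleC_minus_left)

lemma scaleC_of_real: "scaleC (complex_of_real r) x = scaleR r x"
  by (simp add: scaleR_scaleC)

lemma scaleC_sum_right: "scaleC c (sum f A) = (\<Sum>i\<in>A. scaleC c (f i))"
  by (induction A rule: infinite_finite_induct) (auto simp: scaleC_add_right)

lemma cinner_add_right: "cinner z (x + y) = cinner z x + cinner z y"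
  by (metis cinner_commute cinner_add_left complex_cnj_add)

lemma cinner_scaleC_right: "cinner x (scaleC c y) = c * cinner x y"
  by (metis cinner_commute cinner_scaleC_left complex_cnj_mult complex_cnj_cnj)

lemma cinner_zero_left [simp]: "cinner 0 y = 0"
proof -
  have "cinner 0 y = cinner (0+0) y" by simp
  also have "\<dots> = cinner 0 y + cinner 0 y" by (rule cinner_add_left)
  finally show ?thesis by simp
qed

lemma cinner_zero_right [simp]: "cinner y 0 = 0"
  by (metis cinner_commute cinner_zero_left complex_cnj_zero)

lemma cinner_minus_left: "cinner (- x) y = - cinner x y"
proof -
  have "cinner (- x) y + cinner x y = 0" by (simp flip: cinner_add_left)
  then show ?thesis by (simp add: eq_neg_iff_add_eq_0)
qed

lemma cinner_minus_right: "cinner y (- x) = - cinner y x"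
proof -
  have "cinner y (- x) + cinner y x = 0" by (simp flip: cinner_add_right)
  then show ?thesis by (simp add: eq_neg_iff_add_eq_0)
qed

lemma cinner_diff_left: "cinner (x - y) z = cinner x z - cinner y z"
  by (simp only: diff_conv_add_uminus cinner_add_left cinner_minus_left)

lemma cinner_diff_right: "cinner z (x - y) = cinner z x - cinner z y"
  by (simp only: diff_conv_add_uminus cinner_add_right cinner_minus_right)

lemma cinner_scaleR_left: "cinner (scaleR r x) y = complex_of_real r * cinner x y"
  by (simp add: scaleR_scaleC cinner_scaleC_left)

lemma cinner_scaleR_right: "cinner x (scaleR r y) = complex_of_real r * cinner x y"
  by (simp add: scaleR_scaleC cinner_scaleC_right)

lemma cinner_sum_left: "cinner (sum f A) y = (\<Sum>i\<in>A. cinner (f i) y)"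
  by (induction A rule: infinite_finite_induct) (auto simp: cinner_add_left)

lemma cinner_self_Im [simp]: "Im (cinner x x) = 0"
  by (metis cinner_commute cnj.sel(2) equal_neg_zero)

lemma cinner_self_real: "cinner x x = complex_of_real (Re (cinner x x))"
  by (simp add: complex_eq_iff)

lemma norm_sq_cinner: "(norm x)\<^sup>2 = Re (cinner x x)"
  by (simp add: norm_eq_sqrt_cinner cinner_ge_zero)

lemma cinner_self_norm: "cinner x x = complex_of_real ((norm x)\<^sup>2)"
  by (simp add: norm_sq_cinner cinner_self_real[symmetric])

lemma norm_scaleC: "norm (scaleC c (x::'a::complex_inner)) = cmod c * norm x"
proof -
  have "(norm (scaleC c x))\<^sup>2 = Re (cnj c * c * cinner x x)"
    by (simp add: norm_sq_cinner cinner_scaleC_left cinner_scaleC_right mult.assoc)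
  also have "\<dots> = (cmod c * norm x)\<^sup>2"
  proof -
    have "cnj c * c = complex_of_real ((cmod c)\<^sup>2)" by (metis complex_norm_square mult.commute)
    then show ?thesis by (simp add: cinner_self_norm power_mult_distrib flip: of_real_mult)
  qed
  finally show ?thesis
    by (meson mult_nonneg_nonneg norm_ge_zero power2_eq_iff_nonneg)
qed

lemma norm_diff_sq:
  "(norm (a - b))\<^sup>2 = (norm a)\<^sup>2 - 2 * Re (cinner a b) + (norm b)\<^sup>2"
proof -
  have "Re (cinner b a) = Re (cinner a b)"
    by (subst cinner_commute) simp
  then show ?thesis
    by (simp add: norm_sq_cinner cinner_diff_left cinner_diff_right)
qed

lemma norm_add_sq:
  "(norm (a + b))\<^sup>2 = (norm a)\<^sup>2 + 2 * Re (cinner a b) + (norm b)\<^sup>2"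
proof -
  have "Re (cinner b a) = Re (cinner a b)"
    by (subst cinner_commute) simp
  then show ?thesis
    by (simp add: norm_sq_cinner cinner_add_left cinner_add_right)
qed

lemma cauchy_schwarz: "cmod (cinner x y) \<le> norm x * norm y"
proof (cases "y = 0")
  case True then show ?thesis by simp
next
  case False
  define N where "N = (norm y)\<^sup>2"
  have N: "N > 0" using False by (simp add: N_def)
  define t where "t = cinner y x / complex_of_real N"
  have cy: "cinner y y = complex_of_real N" by (simp add: N_def cinner_self_norm)
  have cxy: "cinner y x = cnj (cinner x y)" by (rule cinner_commute)
  have "0 \<le> Re (cinner (x - scaleC t y) (x - scaleC t y))" by (rule cinner_ge_zero)
  also have "cinner (x - scaleC t y) (x - scaleC t y) =
      cinner x x - t * cinner x y - cnj t * cinner y x + cnj t * t * cinner y y"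
    by (simp add: cinner_diff_left cinner_diff_right cinner_scaleC_left cinner_scaleC_right
        algebra_simps)
  also have "\<dots> = cinner x x - cnj (cinner x y) * cinner x y / complex_of_real N"
    using N by (simp add: t_def cy cxy field_simps)
  also have "cnj (cinner x y) * cinner x y = complex_of_real ((cmod (cinner x y))\<^sup>2)"
    by (simp add: complex_norm_square mult.commute del: of_real_power)
  finally have "(cmod (cinner x y))\<^sup>2 / N \<le> (norm x)\<^sup>2"
    by (simp add: norm_sq_cinner)
  then have "(cmod (cinner x y))\<^sup>2 \<le> (norm x)\<^sup>2 * (norm y)\<^sup>2"
    using N by (simp add: N_def divide_le_eq)
  then show ?thesis
    using power2_le_imp_le[of "cmod (cinner x y)" "norm x * norm y"] by (simp add: power_mult_distrib)
qed

lemma cinner_eq_zero_all: "(\<And>x. cinner x y = 0) \<Longrightarrow> y = 0"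
  using cinner_eq_zero_iff by blast

lemma cinner_ext: "(\<And>x. cinner x y = cinner x z) \<Longrightarrow> y = z"
proof -
  assume "\<And>x. cinner x y = cinner x z"
  then have "cinner (y - z) (y - z) = 0" by (simp add: cinner_diff_right)
  then show "y = z" by (simp add: cinner_eq_zero_iff)
qed

context
  fixes A :: "'a::complex_inner \<Rightarrow> 'a"
  assumes bA: "bounded_clinear_op A"
begin

lemma bco_add: "A (x + y) = A x + A y"
  using bA by (simp add: bounded_clinear_op_def)

lemma bco_scaleC: "A (scaleC c x) = scaleC c (A x)"
  using bA by (simp add: bounded_clinear_op_def)

lemma bco_scaleR: "A (scaleR r x) = scaleR r (A x)"
  by (simp add: scaleR_scaleC bco_scaleC)

lemma bco_bounded_linear: "bounded_linear A"
proof -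
  obtain K where K: "\<And>x. norm (A x) \<le> norm x * K"
    using bA by (auto simp: bounded_clinear_op_def)
  show ?thesis
    by (rule bounded_linear_intro[OF bco_add bco_scaleR K])
qed

lemma bco_zero [simp]: "A 0 = 0"
  using bco_bounded_linear linear_simps(3)[of A] bounded_linear.linear by blast

lemma bco_minus: "A (- x) = - A x"
  using bco_bounded_linear by (simp add: linear_simps bounded_linear.linear)

lemma bco_diff: "A (x - y) = A x - A y"
  using bco_bounded_linear by (simp add: linear_simps bounded_linear.linear)

lemma bco_sum: "A (sum f S) = (\<Sum>i\<in>S. A (f i))"
  using bco_bounded_linear by (simp add: linear_sum bounded_linear.linear)

lemma bco_norm: "norm (A x) \<le> onorm A * norm x"
  by (rule onorm[OF bco_bounded_linear])

lemma bco_onorm_nonneg: "0 \<le> onorm A"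
  by (rule onorm_pos_le[OF bco_bounded_linear])

end

lemma bco_intro:
  fixes A :: "'a::complex_inner \<Rightarrow> 'a"
  assumes "\<And>x y. A (x + y) = A x + A y" "\<And>c x. A (scaleC c x) = scaleC c (A x)"
    "\<And>x. norm (A x) \<le> K * norm x"
  shows "bounded_clinear_op A"
  using assms unfolding bounded_clinear_op_def by (metis mult.commute)

lemma bco_id: "bounded_clinear_op (\<lambda>x::'a::complex_inner. x)"
  by (rule bco_intro[where K=1]) auto

lemma bco_comp:
  assumes "bounded_clinear_op A" "bounded_clinear_op B"
  shows "bounded_clinear_op (\<lambda>x. A (B x))"
proof (rule bco_intro[where K="onorm A * onorm B"])
  fix x
  have "norm (A (B x)) \<le> onorm A * norm (B x)" by (rule bco_norm[OF assms(1)])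
  also have "\<dots> \<le> onorm A * (onorm B * norm x)"
    by (rule mult_left_mono[OF bco_norm[OF assms(2)] bco_onorm_nonneg[OF assms(1)]])
  finally show "norm (A (B x)) \<le> onorm A * onorm B * norm x" by (simp add: mult.assoc)
qed (simp_all add: bco_add[OF assms(1)] bco_add[OF assms(2)] bco_scaleC[OF assms(1)] bco_scaleC[OF assms(2)])

lemma bco_plus:
  assumes "bounded_clinear_op A" "bounded_clinear_op B"
  shows "bounded_clinear_op (\<lambda>x. A x + B x)"
proof (rule bco_intro[where K="onorm A + onorm B"])
  fix x
  have "norm (A x + B x) \<le> norm (A x) + norm (B x)" by (rule norm_triangle_ineq)
  also have "\<dots> \<le> onorm A * norm x + onorm B * norm x"
    by (intro add_mono bco_norm assms)
  finally show "norm (A x + B x) \<le> (onorm A + onorm B) * norm x" by (simp add: algebra_simps)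
qed (simp_all add: bco_add[OF assms(1)] bco_add[OF assms(2)] bco_scaleC[OF assms(1)] bco_scaleC[OF assms(2)] scaleC_add_right)

lemma bco_minus_op:
  assumes "bounded_clinear_op A" "bounded_clinear_op B"
  shows "bounded_clinear_op (\<lambda>x. A x - B x)"
proof (rule bco_intro[where K="onorm A + onorm B"])
  fix x
  have "norm (A x - B x) \<le> norm (A x) + norm (B x)" by (rule norm_triangle_ineq4)
  also have "\<dots> \<le> onorm A * norm x + onorm B * norm x"
    by (intro add_mono bco_norm assms)
  finally show "norm (A x - B x) \<le> (onorm A + onorm B) * norm x" by (simp add: algebra_simps)
qed (simp_all add: bco_add[OF assms(1)] bco_add[OF assms(2)] bco_scaleC[OF assms(1)] bco_scaleC[OF assms(2)] scaleC_diff_right)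

lemma bco_scaleR_op:
  assumes "bounded_clinear_op A"
  shows "bounded_clinear_op (\<lambda>x. scaleR r (A x))"
proof (rule bco_intro[where K="\<bar>r\<bar> * onorm A"])
  fix x
  have "norm (scaleR r (A x)) = \<bar>r\<bar> * norm (A x)" by simp
  also have "\<dots> \<le> \<bar>r\<bar> * (onorm A * norm x)"
    by (intro mult_left_mono bco_norm assms) simp
  finally show "norm (scaleR r (A x)) \<le> \<bar>r\<bar> * onorm A * norm x" by (simp add: algebra_simps)
next
  fix c x show "scaleR r (A (scaleC c x)) = scaleC c (scaleR r (A x))"
    by (simp add: bco_scaleC[OF assms] scaleR_scaleC scaleC_scaleC mult.commute)
qed (simp_all add: bco_add[OF assms(1)] scaleR_add_right)

lemma bco_scaleC_op:
  assumes "bounded_clinear_op A"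
  shows "bounded_clinear_op (\<lambda>x. scaleC a (A x))"
proof (rule bco_intro[where K="cmod a * onorm A"])
  fix x
  have "norm (scaleC a (A x)) = cmod a * norm (A x)" by (simp add: norm_scaleC)
  also have "\<dots> \<le> cmod a * (onorm A * norm x)"
    by (intro mult_left_mono bco_norm assms) simp
  finally show "norm (scaleC a (A x)) \<le> cmod a * onorm A * norm x" by (simp add: algebra_simps)
next
  fix c x show "scaleC a (A (scaleC c x)) = scaleC c (scaleC a (A x))"
    by (simp add: bco_scaleC[OF assms] scaleC_scaleC mult.commute)
qed (simp_all add: bco_add[OF assms(1)] scaleC_add_right)

lemma bco_onorm_le:
  fixes A :: "'a::complex_inner \<Rightarrow> 'a"
  assumes "0 \<le> K" "\<And>x. norm (A x) \<le> K * norm x"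
  shows "onorm A \<le> K"
  by (rule onorm_bound[OF assms])

lemma bco_almost_norming:
  fixes A :: "'a::complex_inner \<Rightarrow> 'a"
  assumes bA: "bounded_clinear_op A" and c: "0 \<le> c" "c < onorm A"
  shows "\<exists>x. norm x = 1 \<and> c < norm (A x)"
proof (rule ccontr)
  assume "\<not> ?thesis"
  then have h: "norm x = 1 \<Longrightarrow> norm (A x) \<le> c" for x by force
  have "norm (A x) \<le> c * norm x" for x
  proof (cases "x = 0")
    case True then show ?thesis using bA by simp
  next
    case False
    define u where "u = scaleR (1 / norm x) x"
    have u: "norm u = 1" using False by (simp add: u_def)
    have "x = scaleR (norm x) u" using False by (simp add: u_def)
    then have "A x = scaleR (norm x) (A u)" by (metis bco_scaleR[OF bA])
    then have "norm (A x) = norm x * norm (A u)" by simp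
    also have "\<dots> \<le> norm x * c" using h[OF u] by (simp add: mult_left_mono)
    finally show ?thesis by (simp add: mult.commute)
  qed
  then have "onorm A \<le> c" by (rule bco_onorm_le[OF c(1)])
  with c show False by simp
qed

section \<open>Riesz representation and adjoints\<close>

lemma riesz:
  fixes f :: "'a::chilbert_space \<Rightarrow> complex"
  assumes fadd: "\<And>x y. f (x + y) = f x + f y" and fsc: "\<And>c x. f (scaleC c x) = c * f x"
    and fb: "\<And>x. cmod (f x) \<le> K * norm x"
  shows "\<exists>y. \<forall>x. f x = cinner y x"
proof (cases "\<forall>x. f x = 0")
  case True then show ?thesis by (intro exI[of _ 0]) simp
next
  case False
  then obtain u0 where u0: "f u0 \<noteq> 0" by blast
  have fR: "f (scaleR r x) = complex_of_real r * f x" for r x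
    by (simp add: scaleR_scaleC fsc)
  have blf: "bounded_linear f"
    by (rule bounded_linear_intro[where K=K]) (simp_all add: fadd fR scaleR_conv_of_real fb mult.commute)
  define H where "H = {x. f x = 1}"
  have u1: "scaleC (1 / f u0) u0 \<in> H" using u0 by (simp add: H_def fsc)
  define d where "d = Inf (norm ` H)"
  have bdd: "bdd_below (norm ` H)" by (intro bdd_belowI[of _ 0]) auto
  have d_le: "d \<le> norm x" if "x \<in> H" for x
    unfolding d_def using bdd that by (simp add: cInf_lower)
  have d0: "0 \<le> d" unfolding d_def using u1 by (intro cInf_greatest) auto
  have mid: "scaleR (1/2) (x + y) \<in> H" if "x \<in> H" "y \<in> H" for x y
    using that by (simp add: H_def fR fadd)
  have par: "(norm (x - y))\<^sup>2 \<le> 2 * (norm x)\<^sup>2 + 2 * (norm y)\<^sup>2 - 4 * d\<^sup>2"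
    if "x \<in> H" "y \<in> H" for x y
  proof -
    have "d \<le> norm (scaleR (1/2) (x + y))" by (rule d_le[OF mid[OF that]])
    then have "2 * d \<le> norm (x + y)" by simp
    then have "(2 * d)\<^sup>2 \<le> (norm (x + y))\<^sup>2"
      using d0 by (intro power_mono) auto
    then have "4 * d\<^sup>2 \<le> (norm (x + y))\<^sup>2" by (simp add: power_mult_distrib)
    then show ?thesis by (simp add: norm_diff_sq norm_add_sq)
  qed
  have "\<exists>h. h \<in> H \<and> (norm h)\<^sup>2 < d\<^sup>2 + 1 / (Suc n)" for n
  proof -
    have "d < sqrt (d\<^sup>2 + 1 / Suc n)"
      using d0 by (simp add: real_less_rsqrt)
    moreover have "norm ` H \<noteq> {}" using u1 by blast
    ultimately obtain h where "h \<in> H" and hlt: "norm h < sqrt (d\<^sup>2 + 1 / Suc n)"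
      unfolding d_def using cInf_lessD[of "norm ` H"] by blast
    have "(norm h)\<^sup>2 < (sqrt (d\<^sup>2 + 1 / Suc n))\<^sup>2"
      by (rule power_strict_mono[OF hlt]) auto
    also have "\<dots> = d\<^sup>2 + 1 / Suc n" by simp
    finally show ?thesis using \<open>h \<in> H\<close> by blast
  qed
  then obtain h where hH: "\<And>n. h n \<in> H" and hn: "\<And>n. (norm (h n))\<^sup>2 < d\<^sup>2 + 1 / Suc n"
    by metis
  have "Cauchy h"
  proof (rule metric_CauchyI)
    fix e :: real assume e: "0 < e"
    obtain M where M: "4 / e\<^sup>2 < real M"
      using reals_Archimedean2 by blast
    show "\<exists>M. \<forall>m\<ge>M. \<forall>n\<ge>M. dist (h m) (h n) < e"
    proof (intro exI allI impI)
      fix m n assume mn: "M \<le> m" "M \<le> n"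
      have "(norm (h m - h n))\<^sup>2 \<le> 2 * (norm (h m))\<^sup>2 + 2 * (norm (h n))\<^sup>2 - 4 * d\<^sup>2"
        by (rule par[OF hH hH])
      also have "\<dots> < 2 * (d\<^sup>2 + 1 / Suc m) + 2 * (d\<^sup>2 + 1 / Suc n) - 4 * d\<^sup>2"
        using hn[of m] hn[of n] by simp
      also have "\<dots> = 2 / Suc m + 2 / Suc n" by simp
      also have "\<dots> \<le> 2 / Suc M + 2 / Suc M"
        using mn by (intro add_mono divide_left_mono) auto
      also have "\<dots> < e\<^sup>2"
      proof -
        have "4 / e\<^sup>2 < Suc M" using M by simp
        then have "4 < e\<^sup>2 * Suc M" using e by (simp add: divide_less_eq mult.commute)
        then show ?thesis by (simp add: divide_less_eq mult.commute)
      qed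
      finally have "(norm (h m - h n))\<^sup>2 < e\<^sup>2" .
      then show "dist (h m) (h n) < e"
        using e by (simp add: dist_norm power_less_imp_less_base)
    qed
  qed
  then obtain v where hv: "h \<longlonglongrightarrow> v" using Cauchy_convergent_iff convergent_def by blast
  have tl: "(\<lambda>n. f (h n)) \<longlonglongrightarrow> f v" by (rule bounded_linear.tendsto[OF blf hv])
  have e1: "(\<lambda>n. f (h n)) = (\<lambda>n. 1)" using hH by (simp add: H_def)
  from tl have "(\<lambda>n. 1::complex) \<longlonglongrightarrow> f v" unfolding e1 .
  then have "1 = f v" by (rule LIMSEQ_unique[OF tendsto_const])
  then have fv: "f v = 1" by simp
  have nv: "(norm v)\<^sup>2 \<le> d\<^sup>2"
  proof -
    have l1: "(\<lambda>n. (norm (h n))\<^sup>2) \<longlonglongrightarrow> (norm v)\<^sup>2"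
      by (intro tendsto_intros hv)
    have l2: "(\<lambda>n. d\<^sup>2 + 1 / Suc n) \<longlonglongrightarrow> d\<^sup>2 + 0"
      by (intro tendsto_intros LIMSEQ_inverse_real_of_nat[unfolded inverse_eq_divide] )
    show ?thesis using LIMSEQ_le[OF l1 l2] hn by (simp add: less_imp_le)
  qed
  have vmin: "norm v \<le> norm x" if "x \<in> H" for x
    using nv d_le[OF that] d0 by (meson norm_ge_zero order_trans power2_le_imp_le)
  have orth: "cinner v k = 0" if "f k = 0" for k
  proof (rule ccontr)
    define a where "a = cinner v k"
    assume "cinner v k \<noteq> 0"
    then have a0: "a \<noteq> 0" by (simp add: a_def)
    define s where "s = 1 / ((norm k)\<^sup>2 + 1)"
    have "0 < (norm k)\<^sup>2 + 1" using zero_le_power2[of "norm k"] by linarith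
    then have s0: "0 < s" by (simp add: s_def)
    have sk: "s * (norm k)\<^sup>2 < 1" using \<open>0 < (norm k)\<^sup>2 + 1\<close> by (simp add: s_def divide_less_eq)
    define t where "t = - complex_of_real s * cnj a"
    have "v + scaleC t k \<in> H" using fv that by (simp add: H_def fadd fsc)
    then have "norm v \<le> norm (v + scaleC t k)" by (rule vmin)
    then have "(norm v)\<^sup>2 \<le> (norm (v + scaleC t k))\<^sup>2" by (simp add: power_mono)
    also have "\<dots> = (norm v)\<^sup>2 + 2 * Re (t * a) + (cmod t * norm k)\<^sup>2"
      by (simp add: norm_add_sq cinner_scaleC_right norm_scaleC a_def)
    also have "t * a = - complex_of_real (s * (cmod a)\<^sup>2)"
    proof -
      have "cnj a * a = complex_of_real ((cmod a)\<^sup>2)" by (metis complex_norm_square mult.commute)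
      then show ?thesis by (simp add: t_def mult.assoc)
    qed
    also have "cmod t = s * cmod a" using s0 by (simp add: t_def norm_mult)
    finally have "0 \<le> - 2 * (s * (cmod a)\<^sup>2) + (s * cmod a * norm k)\<^sup>2" by simp
    then have "0 \<le> s * (cmod a)\<^sup>2 * (s * (norm k)\<^sup>2 - 2)"
      by (simp add: power_mult_distrib algebra_simps power2_eq_square)
    moreover have "0 < s * (cmod a)\<^sup>2" using s0 a0 by simp
    ultimately have "0 \<le> s * (norm k)\<^sup>2 - 2" by (simp add: zero_le_mult_iff)
    with sk show False by simp
  qed
  have "f 0 = 0" using fsc[of 0 0] by simp
  then have v0: "v \<noteq> 0" using fv by auto
  define N where "N = (norm v)\<^sup>2"
  have N0: "0 < N" using v0 by (simp add: N_def)
  show ?thesis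
  proof (intro exI allI)
    fix x
    have "f x = f (x - scaleC (f x) v) + f (scaleC (f x) v)"
      using fadd[of "x - scaleC (f x) v" "scaleC (f x) v"] by simp
    then have "f (x - scaleC (f x) v) = 0" by (simp add: fsc fv)
    then have "cinner v (x - scaleC (f x) v) = 0" by (rule orth)
    then have "cinner v x = f x * complex_of_real N"
      by (simp add: cinner_diff_right cinner_scaleC_right cinner_self_norm N_def)
    then show "f x = cinner (scaleC (complex_of_real (1 / N)) v) x"
      using N0 by (simp add: cinner_scaleC_left field_simps)
  qed
qed

lemma adj_exists:
  fixes A :: "'a::chilbert_space \<Rightarrow> 'a"
  assumes bA: "bounded_clinear_op A"
  shows "\<exists>B. \<forall>x y. cinner (A x) y = cinner x (B y)"
proof -
  have "\<exists>z. \<forall>x. cinner (A x) y = cinner x z" for y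
  proof -
    have "\<exists>z. \<forall>x. cinner y (A x) = cinner z x"
    proof (rule riesz[where K="norm y * onorm A"])
      fix x
      have "cmod (cinner y (A x)) \<le> norm y * norm (A x)" by (rule cauchy_schwarz)
      also have "\<dots> \<le> norm y * (onorm A * norm x)"
        by (intro mult_left_mono bco_norm[OF bA]) simp
      finally show "cmod (cinner y (A x)) \<le> norm y * onorm A * norm x" by (simp add: mult.assoc)
    qed (simp_all add: bco_add[OF bA] bco_scaleC[OF bA] cinner_add_right cinner_scaleC_right)
    then obtain z where "\<forall>x. cinner y (A x) = cinner z x" by blast
    then have "\<forall>x. cinner (A x) y = cinner x z" by (metis cinner_commute)
    then show ?thesis by blast
  qed
  then show ?thesis by metis
qed

lemma adj_unique:
  fixes A :: "'a::complex_inner \<Rightarrow> 'a"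
  assumes "\<forall>x y. cinner (A x) y = cinner x (B y)"
  shows "adj A = B"
  unfolding adj_def
proof (rule the_equality)
  fix B' assume "\<forall>x y. cinner (A x) y = cinner x (B' y)"
  with assms have "\<And>y. B' y = B y" by (metis cinner_ext)
  then show "B' = B" by (rule ext)
qed (rule assms)

lemma adj_prop:
  fixes A :: "'a::chilbert_space \<Rightarrow> 'a"
  assumes "bounded_clinear_op A"
  shows "cinner (A x) y = cinner x (adj A y)"
proof -
  obtain B where B: "\<forall>x y. cinner (A x) y = cinner x (B y)" using adj_exists[OF assms] by blast
  then have "adj A = B" by (rule adj_unique)
  with B show ?thesis by simp
qed

lemma adj_prop2:
  fixes A :: "'a::chilbert_space \<Rightarrow> 'a"
  assumes "bounded_clinear_op A"
  shows "cinner (adj A x) y = cinner x (A y)"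
  by (metis adj_prop[OF assms] cinner_commute)

lemma adj_bco:
  fixes A :: "'a::chilbert_space \<Rightarrow> 'a"
  assumes bA: "bounded_clinear_op A"
  shows "bounded_clinear_op (adj A)" and "\<And>y. norm (adj A y) \<le> onorm A * norm y"
proof -
  show nb: "norm (adj A y) \<le> onorm A * norm y" for y
  proof -
    have "(norm (adj A y))\<^sup>2 = Re (cinner (A (adj A y)) y)"
      by (simp add: norm_sq_cinner adj_prop[OF bA])
    also have "\<dots> \<le> cmod (cinner (A (adj A y)) y)" by (rule complex_Re_le_cmod)
    also have "\<dots> \<le> norm (A (adj A y)) * norm y" by (rule cauchy_schwarz)
    also have "\<dots> \<le> onorm A * norm (adj A y) * norm y"
      by (intro mult_right_mono bco_norm[OF bA]) simp
    finally have "norm (adj A y) * norm (adj A y) \<le> (onorm A * norm y) * norm (adj A y)"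
      by (simp add: power2_eq_square algebra_simps)
    then show ?thesis
      by (cases "norm (adj A y) = 0") (auto simp: mult_le_cancel_right bco_onorm_nonneg[OF bA])
  qed
  show "bounded_clinear_op (adj A)"
  proof (rule bco_intro[OF _ _ nb])
    fix y z show "adj A (y + z) = adj A y + adj A z"
      by (rule cinner_ext) (simp add: adj_prop[OF bA, symmetric] cinner_add_right)
  next
    fix c y show "adj A (scaleC c y) = scaleC c (adj A y)"
      by (rule cinner_ext) (simp add: adj_prop[OF bA, symmetric] cinner_scaleC_right)
  qed
qed

lemma adj_adj:
  fixes A :: "'a::chilbert_space \<Rightarrow> 'a"
  assumes "bounded_clinear_op A"
  shows "adj (adj A) = A"
  by (rule adj_unique) (simp add: adj_prop2[OF assms])

lemma onorm_adj:
  fixes A :: "'a::chilbert_space \<Rightarrow> 'a"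
  assumes bA: "bounded_clinear_op A"
  shows "onorm (adj A) = onorm A"
proof (rule antisym)
  show "onorm (adj A) \<le> onorm A"
    by (rule bco_onorm_le[OF bco_onorm_nonneg[OF bA] adj_bco(2)[OF bA]])
  have "onorm (adj (adj A)) \<le> onorm (adj A)"
    by (rule bco_onorm_le[OF bco_onorm_nonneg[OF adj_bco(1)[OF bA]] adj_bco(2)[OF adj_bco(1)[OF bA]]])
  then show "onorm A \<le> onorm (adj A)" by (simp add: adj_adj[OF bA])
qed

definition sa :: "('a::complex_inner \<Rightarrow> 'a) \<Rightarrow> bool" where
  "sa T \<longleftrightarrow> (\<forall>x y. cinner (T x) y = cinner x (T y))"

definition posop :: "('a::complex_inner \<Rightarrow> 'a) \<Rightarrow> bool" where
  "posop T \<longleftrightarrow> bounded_clinear_op T \<and> sa T \<and> (\<forall>x. 0 \<le> Re (cinner (T x) x))"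

lemma sa_Im: "sa T \<Longrightarrow> Im (cinner (T x) x) = 0"
  unfolding sa_def by (metis cinner_commute cnj.sel(2) equal_neg_zero)

lemma sa_real: "sa T \<Longrightarrow> cinner (T x) x = complex_of_real (Re (cinner (T x) x))"
  by (simp add: complex_eq_iff sa_Im)

lemma AstarA_pos:
  fixes A :: "'a::chilbert_space \<Rightarrow> 'a"
  assumes bA: "bounded_clinear_op A"
  shows "posop (\<lambda>x. adj A (A x))"
    and "\<And>x. cinner (adj A (A x)) x = complex_of_real ((norm (A x))\<^sup>2)"
proof -
  show c: "cinner (adj A (A x)) x = complex_of_real ((norm (A x))\<^sup>2)" for x
    by (simp add: adj_prop2[OF bA] cinner_self_norm)
  show "posop (\<lambda>x. adj A (A x))"
    unfolding posop_def sa_def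
  proof (intro conjI allI)
    fix x show "0 \<le> Re (cinner (adj A (A x)) x)" by (simp only: c) simp
  qed (simp_all add: bco_comp[OF adj_bco(1)[OF bA] bA] adj_prop2[OF bA] adj_prop[OF bA])
qed

lemma AAstar_pos:
  fixes A :: "'a::chilbert_space \<Rightarrow> 'a"
  assumes bA: "bounded_clinear_op A"
  shows "posop (\<lambda>x. A (adj A x))"
    and "\<And>x. cinner (A (adj A x)) x = complex_of_real ((norm (adj A x))\<^sup>2)"
  using AstarA_pos[OF adj_bco(1)[OF bA]] by (simp_all add: adj_adj[OF bA])

section \<open>Polynomials of operators\<close>

definition cop_poly :: "complex poly \<Rightarrow> ('a::complex_inner \<Rightarrow> 'a) \<Rightarrow> 'a \<Rightarrow> 'a" where
  "cop_poly q T x = (\<Sum>i\<le>degree q. scaleC (coeff q i) ((T ^^ i) x))"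

lemma cop_poly_bound:
  assumes "degree q \<le> n"
  shows "cop_poly q T x = (\<Sum>i\<le>n. scaleC (coeff q i) ((T ^^ i) x))"
  unfolding cop_poly_def
proof (rule sum.mono_neutral_left)
  show "\<forall>i\<in>{..n} - {..degree q}. scaleC (coeff q i) ((T ^^ i) x) = 0"
    by (auto simp: coeff_eq_0)
qed (use assms in auto)

lemma degree_map_of_real [simp]: "degree (map_poly complex_of_real p) = degree p"
  by (rule degree_map_poly) simp

lemma op_poly_cop: "op_poly p T x = cop_poly (map_poly complex_of_real p) T x"
  by (simp add: op_poly_def cop_poly_def coeff_map_poly scaleR_scaleC)

lemma map_poly_of_real_add:
  "map_poly complex_of_real (p + q) = map_poly complex_of_real p + map_poly complex_of_real q"
  by (intro poly_eqI) (simp add: coeff_map_poly)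

lemma map_poly_of_real_diff:
  "map_poly complex_of_real (p - q) = map_poly complex_of_real p - map_poly complex_of_real q"
  by (intro poly_eqI) (simp add: coeff_map_poly)

lemma map_poly_of_real_mult:
  "map_poly complex_of_real (p * q) = map_poly complex_of_real p * map_poly complex_of_real q"
proof (induction p)
  case (pCons a p)
  show ?case
    by (simp add: mult_pCons_left map_poly_of_real_add map_poly_smult map_poly_pCons pCons.IH)
qed simp

lemma poly_map_of_real: "poly (map_poly complex_of_real p) (complex_of_real t) = complex_of_real (poly p t)"
  by (induction p) (auto simp: map_poly_pCons)

context
  fixes T :: "'a::complex_inner \<Rightarrow> 'a"
  assumes bT: "bounded_clinear_op T"
begin

lemma funpow_bco: "bounded_clinear_op (T ^^ i)"
proof (induction i)
  case 0 then show ?case using bco_id by (simp add: id_def)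
next
  case (Suc i)
  have "bounded_clinear_op (\<lambda>x. T ((T ^^ i) x))" by (rule bco_comp[OF bT Suc.IH])
  then show ?case by (simp add: o_def)
qed

lemma cop_poly_pCons: "cop_poly (pCons a q) T x = scaleC a x + T (cop_poly q T x)"
proof -
  have "cop_poly (pCons a q) T x = (\<Sum>i\<le>Suc (degree q). scaleC (coeff (pCons a q) i) ((T ^^ i) x))"
    by (rule cop_poly_bound) (simp add: degree_pCons_le)
  also have "\<dots> = scaleC a x + (\<Sum>i\<le>degree q. scaleC (coeff q i) ((T ^^ Suc i) x))"
    by (subst sum.atMost_Suc_shift) simp
  also have "(\<Sum>i\<le>degree q. scaleC (coeff q i) ((T ^^ Suc i) x)) = T (cop_poly q T x)"
    by (simp add: cop_poly_def bco_sum[OF bT] bco_scaleC[OF bT])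
  finally show ?thesis .
qed

lemma cop_poly_0 [simp]: "cop_poly 0 T x = 0"
  by (simp add: cop_poly_def)

lemma cop_poly_add: "cop_poly (p + q) T x = cop_poly p T x + cop_poly q T x"
proof -
  define n where "n = max (degree p) (degree q)"
  have "cop_poly (p + q) T x = (\<Sum>i\<le>n. scaleC (coeff (p + q) i) ((T ^^ i) x))"
    by (rule cop_poly_bound) (simp add: n_def degree_add_le)
  also have "\<dots> = (\<Sum>i\<le>n. scaleC (coeff p i) ((T ^^ i) x)) + (\<Sum>i\<le>n. scaleC (coeff q i) ((T ^^ i) x))"
    by (simp add: scaleC_add_left sum.distrib)
  also have "\<dots> = cop_poly p T x + cop_poly q T x"
    by (simp add: cop_poly_bound[of p n] cop_poly_bound[of q n] n_def)
  finally show ?thesis .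
qed

lemma cop_poly_smult: "cop_poly (smult c p) T x = scaleC c (cop_poly p T x)"
proof -
  have "cop_poly (smult c p) T x = (\<Sum>i\<le>degree p. scaleC (coeff (smult c p) i) ((T ^^ i) x))"
    by (rule cop_poly_bound) (rule degree_smult_le)
  then show ?thesis
    by (simp add: cop_poly_def scaleC_sum_right scaleC_scaleC)
qed

lemma cop_poly_mult: "cop_poly (p * q) T x = cop_poly p T (cop_poly q T x)"
proof (induction p arbitrary: x)
  case 0 then show ?case by simp
next
  case (pCons a p)
  have "cop_poly (pCons a p * q) T x = cop_poly (smult a q + pCons 0 (p * q)) T x"
    by (simp add: mult_pCons_left)
  also have "\<dots> = scaleC a (cop_poly q T x) + T (cop_poly p T (cop_poly q T x))"
    by (simp add: cop_poly_add cop_poly_smult cop_poly_pCons pCons.IH)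
  also have "\<dots> = cop_poly (pCons a p) T (cop_poly q T x)"
    by (simp add: cop_poly_pCons)
  finally show ?case .
qed

lemma cop_poly_const: "cop_poly [:c:] T x = scaleC c x"
  by (simp add: bco_zero[OF bT] cop_poly_pCons)

lemma cop_poly_lin: "cop_poly [:- z, 1:] T x = T x - scaleC z x"
  by (simp add: bco_zero[OF bT] cop_poly_pCons scaleC_minus_left scaleC_one)

lemma cop_poly_bco: "bounded_clinear_op (cop_poly q T)"
proof (induction q)
  case 0
  have "bounded_clinear_op (\<lambda>x::'a. 0)" by (rule bco_intro[where K=0]) auto
  then show ?case by (simp add: fun_eq_iff)
next
  case (pCons a q)
  have "bounded_clinear_op (\<lambda>x. scaleC a x + T (cop_poly q T x))"
    by (intro bco_plus bco_scaleC_op bco_id bco_comp[OF bT] pCons.IH)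
  then show ?case by (simp add: cop_poly_pCons fun_eq_iff)
qed

lemma op_poly_bco: "bounded_clinear_op (op_poly p T)"
  using cop_poly_bco by (simp add: op_poly_cop[abs_def])

lemma op_poly_mult: "op_poly (p * q) T x = op_poly p T (op_poly q T x)"
  by (simp add: op_poly_cop map_poly_of_real_mult cop_poly_mult)

lemma op_poly_add: "op_poly (p + q) T x = op_poly p T x + op_poly q T x"
  by (simp add: op_poly_cop map_poly_of_real_add cop_poly_add)

lemma op_poly_diff: "op_poly (p - q) T x = op_poly p T x - op_poly q T x"
proof -
  have "op_poly (p - q + q) T x = op_poly (p - q) T x + op_poly q T x" by (rule op_poly_add)
  then show ?thesis by simp
qed

lemma op_poly_const: "op_poly [:c:] T x = scaleR c x"
  by (simp add: bco_zero[OF bT] op_poly_cop map_poly_pCons cop_poly_const scaleC_of_real)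

lemma op_poly_X: "op_poly [:0, 1:] T x = T x"
  by (simp add: bco_zero[OF bT] op_poly_cop map_poly_pCons cop_poly_pCons scaleC_one)

lemma op_poly_pCons: "op_poly (pCons a p) T x = scaleR a x + T (op_poly p T x)"
  by (simp add: op_poly_cop map_poly_pCons cop_poly_pCons scaleC_of_real)

lemma op_poly_comm: "op_poly p T (T x) = T (op_poly p T x)"
proof -
  have "op_poly (p * [:0,1:]) T x = op_poly ([:0,1:] * p) T x" by (simp add: mult.commute)
  then show ?thesis by (simp only: op_poly_mult op_poly_X)
qed

lemma op_poly_sa: "sa T \<Longrightarrow> sa (op_poly p T)"
proof (induction p)
  case 0 then show ?case by (simp add: sa_def op_poly_cop)
next
  case (pCons a p)
  then have IH: "cinner (op_poly p T x) y = cinner x (op_poly p T y)" for x y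
    by (simp add: sa_def)
  show ?case unfolding sa_def
  proof (intro allI)
    fix x y
    have "cinner (op_poly (pCons a p) T x) y = complex_of_real a * cinner x y + cinner (op_poly p T x) (T y)"
      using pCons.prems by (simp add: op_poly_pCons cinner_add_left cinner_scaleR_left sa_def)
    also have "\<dots> = complex_of_real a * cinner x y + cinner x (T (op_poly p T y))"
      by (simp add: IH op_poly_comm)
    also have "\<dots> = cinner x (op_poly (pCons a p) T y)"
      by (simp add: op_poly_pCons cinner_add_right cinner_scaleR_right)
    finally show "cinner (op_poly (pCons a p) T x) y = cinner x (op_poly (pCons a p) T y)" .
  qed
qed

end

section \<open>Approximate point spectrum and the polynomial norm bound\<close>

definition nbb :: "('a::complex_inner \<Rightarrow> 'a) \<Rightarrow> bool" where
  "nbb F \<longleftrightarrow> (\<forall>\<delta>>0. \<exists>x. norm x = 1 \<and> norm (F x) < \<delta>)"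

lemma bb_of_not_nbb:
  fixes F :: "'a::complex_inner \<Rightarrow> 'a"
  assumes bF: "bounded_clinear_op F" and n: "\<not> nbb F"
  shows "\<exists>\<delta>>0. \<forall>x. \<delta> * norm x \<le> norm (F x)"
proof -
  from n obtain \<delta> where d: "\<delta> > 0" and h: "\<And>x. norm x = 1 \<Longrightarrow> \<delta> \<le> norm (F x)"
    unfolding nbb_def by (auto simp: not_less)
  have "\<delta> * norm x \<le> norm (F x)" for x
  proof (cases "x = 0")
    case True then show ?thesis using bF by simp
  next
    case False
    define u where "u = scaleR (1 / norm x) x"
    have u: "norm u = 1" using False by (simp add: u_def)
    have "x = scaleR (norm x) u" using False by (simp add: u_def)
    then have "F x = scaleR (norm x) (F u)" by (metis bco_scaleR[OF bF])
    then have "norm (F x) = norm x * norm (F u)" by simp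
    moreover have "norm x * \<delta> \<le> norm x * norm (F u)" using h[OF u] by (simp add: mult_left_mono)
    ultimately show ?thesis by (simp add: mult.commute)
  qed
  with d show ?thesis by blast
qed

lemma nbb_root:
  fixes T :: "'a::complex_inner \<Rightarrow> 'a"
  assumes bT: "bounded_clinear_op T"
  shows "q \<noteq> 0 \<Longrightarrow> nbb (cop_poly q T) \<Longrightarrow> \<exists>z. poly q z = 0 \<and> nbb (\<lambda>x. T x - scaleC z x)"
proof (induction "degree q" arbitrary: q rule: less_induct)
  case less
  show ?case
  proof (cases "degree q = 0")
    case True
    then obtain c where qc: "q = [:c:]" by (metis degree_eq_zeroE)
    with less.prems have c0: "c \<noteq> 0" by simp
    from less.prems(2) obtain x where "norm x = 1" "norm (cop_poly q T x) < cmod c"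
      unfolding nbb_def using c0 by (meson zero_less_norm_iff)
    then show ?thesis by (simp add: qc cop_poly_const[OF bT] norm_scaleC)
  next
    case False
    have "\<not> (\<exists>a l. a \<noteq> 0 \<and> l = 0 \<and> q = pCons a l)" using False by auto
    then obtain z where z: "poly q z = 0" using fundamental_theorem_of_algebra_alt by blast
    then obtain r where qr: "q = [:- z, 1:] * r" using poly_eq_0_iff_dvd by (metis dvdE)
    have r0: "r \<noteq> 0" using less.prems(1) qr by auto
    have "degree q = degree [:- z, 1:] + degree r"
      unfolding qr by (rule degree_mult_eq) (use r0 in auto)
    then have dr: "degree r < degree q" by simp
    show ?thesis
    proof (cases "nbb (\<lambda>x. T x - scaleC z x)")
      case True with z show ?thesis by blast
    next
      case False
      have bL: "bounded_clinear_op (\<lambda>x. T x - scaleC z x)"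
        by (intro bco_minus_op bT bco_scaleC_op bco_id)
      obtain \<delta> where d: "\<delta> > 0" and db: "\<And>y. \<delta> * norm y \<le> norm (T y - scaleC z y)"
        using bb_of_not_nbb[OF bL False] by blast
      have "nbb (cop_poly r T)"
        unfolding nbb_def
      proof (intro allI impI)
        fix e :: real assume e: "e > 0"
        obtain x where x: "norm x = 1" "norm (cop_poly q T x) < \<delta> * e"
          using less.prems(2) d e unfolding nbb_def by (meson mult_pos_pos)
        have "cop_poly q T x = cop_poly [:- z, 1:] T (cop_poly r T x)"
          by (simp only: qr cop_poly_mult[OF bT])
        then have "cop_poly q T x = T (cop_poly r T x) - scaleC z (cop_poly r T x)"
          by (simp only: cop_poly_lin[OF bT])
        then have "\<delta> * norm (cop_poly r T x) < \<delta> * e" using db x(2) by (metis le_less_trans)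
        then have "norm (cop_poly r T x) < e" using d by simp
        with x(1) show "\<exists>x. norm x = 1 \<and> norm (cop_poly r T x) < e" by blast
      qed
      from less.hyps[OF dr r0 this] obtain w where "poly r w = 0" "nbb (\<lambda>x. T x - scaleC w x)"
        by blast
      then show ?thesis by (intro exI[of _ w]) (simp add: qr)
    qed
  qed
qed

lemma posop_bound:
  fixes T :: "'a::complex_inner \<Rightarrow> 'a"
  assumes pT: "posop T"
  shows "Re (cinner (T x) x) \<le> onorm T * (norm x)\<^sup>2"
proof -
  have bT: "bounded_clinear_op T" using pT by (simp add: posop_def)
  have "Re (cinner (T x) x) \<le> cmod (cinner (T x) x)" by (rule complex_Re_le_cmod)
  also have "\<dots> \<le> norm (T x) * norm x" by (rule cauchy_schwarz)
  also have "\<dots> \<le> onorm T * norm x * norm x" by (intro mult_right_mono bco_norm[OF bT]) simp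
  finally show ?thesis by (simp add: power2_eq_square mult.assoc)
qed

lemma nbb_spec:
  fixes T :: "'a::complex_inner \<Rightarrow> 'a"
  assumes pT: "posop T" and n: "nbb (\<lambda>x. T x - scaleC z x)"
  shows "Im z = 0" "0 \<le> Re z" "Re z \<le> onorm T"
proof -
  have bT: "bounded_clinear_op T" and sT: "sa T" using pT by (simp_all add: posop_def)
  have key: "\<bar>Im z\<bar> < \<delta> \<and> - \<delta> < Re z \<and> Re z < onorm T + \<delta>" if d: "\<delta> > 0" for \<delta>
  proof -
    obtain x where x: "norm x = 1" "norm (T x - scaleC z x) < \<delta>" using n d unfolding nbb_def by blast
    define t where "t = Re (cinner (T x) x)"
    have t0: "0 \<le> t" using pT by (simp add: posop_def t_def)
    have tM: "t \<le> onorm T" using posop_bound[OF pT, of x] x(1) by (simp add: t_def)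
    have "cinner (T x - scaleC z x) x = complex_of_real t - cnj z"
      using x(1) by (simp add: cinner_diff_left cinner_scaleC_left cinner_self_norm t_def sa_real[OF sT, symmetric])
    moreover have "cmod (cinner (T x - scaleC z x) x) \<le> norm (T x - scaleC z x)"
      using cauchy_schwarz[of "T x - scaleC z x" x] x(1) by simp
    ultimately have c: "cmod (complex_of_real t - cnj z) < \<delta>" using x(2) by simp
    have "\<bar>Im z\<bar> \<le> cmod (complex_of_real t - cnj z)"
      using abs_Im_le_cmod[of "complex_of_real t - cnj z"] by simp
    moreover have "\<bar>t - Re z\<bar> \<le> cmod (complex_of_real t - cnj z)"
      using abs_Re_le_cmod[of "complex_of_real t - cnj z"] by simp
    ultimately show ?thesis using c t0 tM by linarith
  qed
  show "Im z = 0"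
  proof (rule ccontr)
    assume "Im z \<noteq> 0"
    then show False using key[of "\<bar>Im z\<bar>"] by simp
  qed
  show "0 \<le> Re z"
  proof (rule ccontr)
    assume "\<not> 0 \<le> Re z"
    then show False using key[of "- Re z"] by simp
  qed
  show "Re z \<le> onorm T"
  proof (rule ccontr)
    assume "\<not> Re z \<le> onorm T"
    then show False using key[of "Re z - onorm T"] by simp
  qed
qed

lemma poly_onorm_bound:
  fixes T :: "'a::complex_inner \<Rightarrow> 'a"
  assumes pT: "posop T" and s: "0 \<le> s" and ps: "\<And>t. 0 \<le> t \<Longrightarrow> t \<le> onorm T \<Longrightarrow> \<bar>poly p t\<bar> \<le> s"
  shows "onorm (op_poly p T) \<le> s"
proof (rule ccontr)
  assume "\<not> onorm (op_poly p T) \<le> s"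
  then have as: "s < onorm (op_poly p T)" by simp
  have bT: "bounded_clinear_op T" and sT: "sa T" using pT by (simp_all add: posop_def)
  define H where "H = op_poly p T"
  define a where "a = onorm H"
  define N where "N = a\<^sup>2"
  have bH: "bounded_clinear_op H" unfolding H_def by (rule op_poly_bco[OF bT])
  have sH: "sa H" unfolding H_def by (rule op_poly_sa[OF bT sT])
  have sa: "s < a" using as by (simp add: a_def H_def)
  have a0: "0 < a" using s sa by simp
  have N0: "0 < N" using a0 by (simp add: N_def)
  define Q where "Q = map_poly complex_of_real (p * p - [:N:])"
  have cQ: "cop_poly Q T x = H (H x) - scaleR N x" for x
    by (simp add: Q_def H_def op_poly_cop[symmetric] op_poly_diff[OF bT] op_poly_mult[OF bT] op_poly_const[OF bT])
  have M0: "0 \<le> onorm T" by (rule bco_onorm_nonneg[OF bT])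
  have nroot: "poly Q (complex_of_real t) \<noteq> 0" if "0 \<le> t" "t \<le> onorm T" for t
  proof
    assume "poly Q (complex_of_real t) = 0"
    moreover have "poly Q (complex_of_real t) = complex_of_real (poly (p * p - [:N:]) t)"
      by (simp only: Q_def poly_map_of_real)
    ultimately have "complex_of_real (poly (p * p - [:N:]) t) = 0" by metis
    then have "poly (p * p - [:N:]) t = 0" by (simp only: of_real_eq_0_iff)
    then have "(poly p t)\<^sup>2 = a\<^sup>2" by (simp add: N_def power2_eq_square)
    then have "\<bar>poly p t\<bar> = a" using a0 by (metis abs_of_pos power2_eq_iff_nonneg abs_ge_zero power2_abs)
    with ps[OF that] sa show False by simp
  qed
  have Q0: "Q \<noteq> 0" using nroot[of 0] M0 by auto
  have "nbb (cop_poly Q T)"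
    unfolding nbb_def
  proof (intro allI impI)
    fix \<delta> :: real assume d: "\<delta> > 0"
    define \<eta> where "\<eta> = \<delta>\<^sup>2 / (2 * a * N + 1)"
    have den: "0 < 2 * a * N + 1" using a0 N0 by (metis add_pos_pos mult_pos_pos zero_less_numeral zero_less_one)
    have eta0: "0 < \<eta>" using d den by (simp add: \<eta>_def)
    have "2 * a * N * \<eta> < \<delta>\<^sup>2"
      using d den by (simp add: \<eta>_def field_simps)
    define c where "c = max s (a - \<eta>)"
    have c0: "0 \<le> c" "c < a" using s sa eta0 by (auto simp: c_def)
    obtain x where x: "norm x = 1" "c < norm (H x)"
      using bco_almost_norming[OF bH c0(1) c0(2)[unfolded a_def]] by auto
    have Hxa: "norm (H x) \<le> a" using bco_norm[OF bH, of x] x(1) by (simp add: a_def)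
    have gap: "N - (norm (H x))\<^sup>2 \<le> 2 * a * \<eta>"
    proof -
      have "a - norm (H x) \<le> \<eta>" using x(2) by (simp add: c_def)
      moreover have "N - (norm (H x))\<^sup>2 = (a - norm (H x)) * (a + norm (H x))"
        by (simp add: N_def power2_eq_square algebra_simps)
      moreover have "0 \<le> a + norm (H x)" "a + norm (H x) \<le> 2 * a" using a0 Hxa by auto
      ultimately show ?thesis using Hxa
        by (metis mult_mono mult.commute eta0 less_imp_le diff_ge_0_iff_ge)
    qed
    have HH: "(norm (H (H x)))\<^sup>2 \<le> N * (norm (H x))\<^sup>2"
    proof -
      have "norm (H (H x)) \<le> a * norm (H x)" using bco_norm[OF bH] by (simp add: a_def)
      then have "(norm (H (H x)))\<^sup>2 \<le> (a * norm (H x))\<^sup>2" by (intro power_mono) simp_all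
      then show ?thesis by (simp add: N_def power_mult_distrib)
    qed
    have inn: "Re (cinner (H (H x)) (scaleR N x)) = N * (norm (H x))\<^sup>2"
      using sH by (simp add: cinner_scaleR_right sa_def norm_sq_cinner)
    have "(norm (H (H x) - scaleR N x))\<^sup>2 = (norm (H (H x)))\<^sup>2 - 2 * (N * (norm (H x))\<^sup>2) + N\<^sup>2"
      using x(1) N0 by (simp add: norm_diff_sq inn)
    also have "\<dots> \<le> N * (N - (norm (H x))\<^sup>2)"
      using HH by (simp add: power2_eq_square algebra_simps)
    also have "\<dots> \<le> N * (2 * a * \<eta>)" using gap N0 by (simp add: mult_left_mono)
    also have "\<dots> < \<delta>\<^sup>2" using \<open>2 * a * N * \<eta> < \<delta>\<^sup>2\<close> by (simp add: algebra_simps)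
    finally have "norm (H (H x) - scaleR N x) < \<delta>"
      using d by (simp add: power_less_imp_less_base)
    then show "\<exists>x. norm x = 1 \<and> norm (cop_poly Q T x) < \<delta>" using x(1) by (auto simp: cQ)
  qed
  from nbb_root[OF bT Q0 this] obtain z where z: "poly Q z = 0" "nbb (\<lambda>x. T x - scaleC z x)"
    by blast
  have "z = complex_of_real (Re z)" using nbb_spec(1)[OF pT z(2)] by (simp add: complex_eq_iff)
  then show False using nroot[of "Re z"] nbb_spec(2,3)[OF pT z(2)] z(1) by metis
qed

lemma poly_norm_bound:
  fixes T :: "'a::complex_inner \<Rightarrow> 'a"
  assumes pT: "posop T" and s: "0 \<le> s" and ps: "\<And>t. 0 \<le> t \<Longrightarrow> t \<le> onorm T \<Longrightarrow> \<bar>poly p t\<bar> \<le> s"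
  shows "norm (op_poly p T x) \<le> s * norm x"
proof -
  have bT: "bounded_clinear_op T" using pT by (simp add: posop_def)
  have "norm (op_poly p T x) \<le> onorm (op_poly p T) * norm x" by (rule bco_norm[OF op_poly_bco[OF bT]])
  also have "\<dots> \<le> s * norm x" by (intro mult_right_mono poly_onorm_bound[OF pT s ps]) auto
  finally show ?thesis .
qed

lemma poly_bounded_on:
  fixes p :: "real poly" and M :: real
  shows "\<exists>K\<ge>0. \<forall>t. 0 \<le> t \<and> t \<le> M \<longrightarrow> \<bar>poly p t\<bar> \<le> K"
proof -
  have "compact (poly p ` {0..M})"
    by (intro compact_continuous_image continuous_intros) simp
  then obtain K where K: "\<forall>y\<in>poly p ` {0..M}. norm y \<le> K"
    using compact_imp_bounded bounded_iff by metis
  show ?thesis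
  proof (intro exI[of _ "max K 0"] conjI allI impI)
    fix t assume "0 \<le> t \<and> t \<le> M"
    then have "\<bar>poly p t\<bar> \<le> K" using K by auto
    then show "\<bar>poly p t\<bar> \<le> max K 0" by simp
  qed simp
qed

lemma poly_pos_bound:
  fixes T :: "'a::complex_inner \<Rightarrow> 'a"
  assumes pT: "posop T" and e: "0 \<le> \<epsilon>"
    and pe: "\<And>t. 0 \<le> t \<Longrightarrow> t \<le> onorm T \<Longrightarrow> - \<epsilon> \<le> poly p t"
  shows "- \<epsilon> * (norm x)\<^sup>2 \<le> Re (cinner (op_poly p T x) x)"
proof -
  have bT: "bounded_clinear_op T" using pT by (simp add: posop_def)
  obtain K where K0: "K \<ge> 0" and K: "\<And>t. 0 \<le> t \<Longrightarrow> t \<le> onorm T \<Longrightarrow> \<bar>poly p t\<bar> \<le> K"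
    using poly_bounded_on by blast
  define c where "c = (K - \<epsilon>) / 2"
  define w where "w = (K + \<epsilon>) / 2"
  have w0: "0 \<le> w" using K0 e by (simp add: w_def)
  have cw: "c - w = - \<epsilon>" "c + w = K" by (simp_all add: c_def w_def field_simps)
  have "\<bar>poly (p - [:c:]) t\<bar> \<le> w" if "0 \<le> t" "t \<le> onorm T" for t
    using K[OF that] pe[OF that] cw by (simp add: abs_le_iff)
  then have nb: "norm (op_poly (p - [:c:]) T x) \<le> w * norm x"
    by (intro poly_norm_bound[OF pT w0]) auto
  have eq: "op_poly (p - [:c:]) T x = op_poly p T x - scaleR c x"
    by (simp add: op_poly_diff[OF bT] op_poly_const[OF bT])
  have "Re (cinner (op_poly p T x) x) = Re (cinner (op_poly (p - [:c:]) T x) x) + c * (norm x)\<^sup>2"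
    by (simp add: eq cinner_diff_left cinner_scaleR_left norm_sq_cinner)
  moreover have "- (w * (norm x)\<^sup>2) \<le> Re (cinner (op_poly (p - [:c:]) T x) x)"
  proof -
    have "\<bar>Re (cinner (op_poly (p - [:c:]) T x) x)\<bar> \<le> cmod (cinner (op_poly (p - [:c:]) T x) x)"
      by (rule abs_Re_le_cmod)
    also have "\<dots> \<le> norm (op_poly (p - [:c:]) T x) * norm x" by (rule cauchy_schwarz)
    also have "\<dots> \<le> w * norm x * norm x" by (intro mult_right_mono nb) simp
    finally show ?thesis by (simp add: power2_eq_square mult.assoc)
  qed
  moreover have "(c - w) * (norm x)\<^sup>2 = - \<epsilon> * (norm x)\<^sup>2" using cw(1) by simp
  ultimately show ?thesis by (simp add: left_diff_distrib)
qed

section \<open>Continuous functional calculus for positive operators\<close>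

lemma tri2: "norm (a - c) \<le> norm (a - b) + norm (b - (c::'a::real_normed_vector))"
  using norm_triangle_ineq[of "a - b" "b - c"] by simp

lemma tri3: "norm (a - d) \<le> norm (a - b) + norm (b - c) + norm (c - (d::'a::real_normed_vector))"
  using tri2[of a d c] tri2[of a c b] by linarith

lemma weier_poly:
  fixes f :: "real \<Rightarrow> real"
  assumes cf: "continuous_on {0..M} f" and e: "0 < e"
  shows "\<exists>p. \<forall>t\<in>{0..M}. \<bar>poly p t - f t\<bar> < e"
proof -
  obtain g where g: "real_polynomial_function g" "\<And>x. x \<in> {0..M} \<Longrightarrow> \<bar>f x - g x\<bar> < e"
    using Stone_Weierstrass_real_polynomial_function[OF compact_Icc cf e] by blast
  obtain a n where gs: "g = (\<lambda>x. \<Sum>i\<le>n. a i * x ^ i)"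
    using g(1) real_polynomial_function_iff_sum by blast
  define p where "p = (\<Sum>i\<le>n. monom (a i) i)"
  have "poly p t = g t" for t by (simp add: p_def gs poly_sum poly_monom)
  then show ?thesis using g(2) by (intro exI[of _ p]) (auto simp: abs_minus_commute)
qed

lemma weier_seq:
  fixes f :: "real \<Rightarrow> real"
  assumes cf: "continuous_on {0..M} f"
  shows "\<exists>p. \<forall>n. \<forall>t\<in>{0..M}. \<bar>poly (p n) t - f t\<bar> < 1 / Suc n"
proof -
  have "\<forall>n. \<exists>q. \<forall>t\<in>{0..M}. \<bar>poly q t - f t\<bar> < 1 / Suc n"
    using weier_poly[OF cf] by simp
  then show ?thesis by metis
qed

lemma small_inv_suc:
  fixes e :: real assumes "0 < e"
  shows "\<exists>N. \<forall>n\<ge>N. 1 / real (Suc n) < e"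
proof -
  obtain N where N: "1 / e < real N" using reals_Archimedean2 by blast
  have "1 / real (Suc n) < e" if "N \<le> n" for n
  proof -
    have "1 / e < real (Suc n)" using N that by simp
    then show ?thesis using assms by (simp add: divide_less_eq mult.commute)
  qed
  then show ?thesis by blast
qed

lemma seq_ulim:
  fixes f :: "real \<Rightarrow> real"
  assumes h: "\<And>n t. t \<in> S \<Longrightarrow> \<bar>poly (p n) t - f t\<bar> < 1 / Suc n"
  shows "uniform_limit S (\<lambda>n t. poly (p n) t) f sequentially"
proof (rule uniform_limitI)
  fix e :: real assume e: "0 < e"
  obtain N where N: "\<And>n. N \<le> n \<Longrightarrow> 1 / real (Suc n) < e" using small_inv_suc[OF e] by blast
  show "\<forall>\<^sub>F n in sequentially. \<forall>t\<in>S. dist (poly (p n) t) (f t) < e"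
    unfolding eventually_sequentially
  proof (rule exI[of _ N], intro allI impI ballI)
    fix n t assume "N \<le> n" "t \<in> S"
    have "\<bar>poly (p n) t - f t\<bar> < 1 / Suc n" by (rule h[OF \<open>t \<in> S\<close>])
    also have "\<dots> < e" by (rule N[OF \<open>N \<le> n\<close>])
    finally show "dist (poly (p n) t) (f t) < e" by (simp add: dist_real_def)
  qed
qed

lemma small_le_zero:
  fixes r C :: real
  assumes h: "\<And>\<epsilon>. 0 < \<epsilon> \<Longrightarrow> \<epsilon> < 1 \<Longrightarrow> r \<le> \<epsilon> * C"
  shows "r \<le> 0"
proof (rule ccontr)
  assume "\<not> r \<le> 0"
  then have r: "0 < r" by simp
  define \<epsilon> where "\<epsilon> = min (1/2) (r / (2 * (\<bar>C\<bar> + 1)))"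
  have e0: "0 < \<epsilon>" "\<epsilon> < 1" using r by (auto simp: \<epsilon>_def)
  have "\<epsilon> * C \<le> \<epsilon> * \<bar>C\<bar>" using e0 by (simp add: mult_left_mono)
  also have "\<dots> \<le> r / (2 * (\<bar>C\<bar> + 1)) * \<bar>C\<bar>"
    by (intro mult_right_mono) (auto simp: \<epsilon>_def)
  also have "\<dots> < r"
  proof -
    have "0 \<le> r * \<bar>C\<bar>" "0 < r * 2" using r by simp_all
    show ?thesis using r
      by (simp add: field_simps) (metis add_nonneg_pos abs_ge_zero mult_nonneg_nonneg less_imp_le zero_less_numeral mult_pos_pos)
  qed
  finally show False using h[OF e0] by simp
qed

lemma ops_conv_zero:
  fixes F :: "nat \<Rightarrow> 'a::complex_inner \<Rightarrow> 'a"
  assumes h: "\<And>e. 0 < e \<Longrightarrow> \<forall>\<^sub>F n in sequentially. \<forall>x. norm (F n x) \<le> e * norm x"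
    and bF: "\<And>n. bounded_clinear_op (F n)"
  shows "(\<lambda>n. onorm (F n)) \<longlonglongrightarrow> 0"
proof (rule LIMSEQ_I)
  fix r :: real assume r: "0 < r"
  from h[of "r/2"] r obtain N where N: "\<And>n x. N \<le> n \<Longrightarrow> norm (F n x) \<le> r/2 * norm x"
    unfolding eventually_sequentially by auto
  have "norm (onorm (F n)) < r" if "N \<le> n" for n
  proof -
    have "onorm (F n) \<le> r/2" using r N[OF that] by (intro bco_onorm_le) auto
    then show ?thesis using bco_onorm_nonneg[OF bF] r by simp
  qed
  then show "\<exists>N. \<forall>n\<ge>N. norm (onorm (F n) - 0) < r" by auto
qed

definition fc :: "('a::complex_inner \<Rightarrow> 'a) \<Rightarrow> (real \<Rightarrow> real) \<Rightarrow> ('a \<Rightarrow> 'a) \<Rightarrow> bool" where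
  "fc T f S \<longleftrightarrow> bounded_clinear_op S \<and>
     (\<forall>p :: nat \<Rightarrow> real poly.
        uniform_limit {0..onorm T} (\<lambda>n t. poly (p n) t) f sequentially \<longrightarrow>
        (\<lambda>n. onorm (\<lambda>x. op_poly (p n) T x - S x)) \<longlonglongrightarrow> 0)"

lemma opow_fc: "opow T r = The (fc T (\<lambda>t. t powr r))"
  by (simp add: opow_def fc_def[abs_def])

context
  fixes T :: "'a::chilbert_space \<Rightarrow> 'a" and f :: "real \<Rightarrow> real"
  assumes pT: "posop T" and cf: "continuous_on {0..onorm T} f"
begin

lemma bT: "bounded_clinear_op T" using pT by (simp add: posop_def)

lemma poly_diff_bound:
  assumes "\<And>t. 0 \<le> t \<Longrightarrow> t \<le> onorm T \<Longrightarrow> \<bar>poly p t - f t\<bar> \<le> a"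
    and "\<And>t. 0 \<le> t \<Longrightarrow> t \<le> onorm T \<Longrightarrow> \<bar>poly q t - f t\<bar> \<le> b"
  shows "norm (op_poly p T x - op_poly q T x) \<le> (a + b) * norm x"
proof -
  have a0: "0 \<le> a" using assms(1)[of 0] bco_onorm_nonneg[OF bT] by linarith
  have b0: "0 \<le> b" using assms(2)[of 0] bco_onorm_nonneg[OF bT] by linarith
  have "norm (op_poly (p - q) T x) \<le> (a + b) * norm x"
  proof (rule poly_norm_bound[OF pT])
    fix t assume t: "0 \<le> t" "t \<le> onorm T"
    show "\<bar>poly (p - q) t\<bar> \<le> a + b" using assms(1)[OF t] assms(2)[OF t] by simp
  qed (use a0 b0 in simp)
  then show ?thesis by (simp add: op_poly_diff[OF bT])
qed

lemma fc_exists: "\<exists>S. fc T f S"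
proof -
  obtain p where p: "\<And>n t. t \<in> {0..onorm T} \<Longrightarrow> \<bar>poly (p n) t - f t\<bar> < 1 / Suc n"
    using weier_seq[OF cf] by blast
  define P where "P n = op_poly (p n) T" for n
  have bP: "bounded_clinear_op (P n)" for n unfolding P_def by (rule op_poly_bco[OF bT])
  have Pd: "norm (P n x - P m x) \<le> (1 / Suc n + 1 / Suc m) * norm x" for n m x
    unfolding P_def by (rule poly_diff_bound) (use p in \<open>auto intro: less_imp_le\<close>)
  have "Cauchy (\<lambda>n. P n x)" for x
  proof (rule metric_CauchyI)
    fix e :: real assume e: "0 < e"
    have "0 < norm x + 1" by (simp add: add_nonneg_pos)
    then have "0 < e / (2 * (norm x + 1))" using e by simp
    then obtain N where N: "\<And>n. N \<le> n \<Longrightarrow> 1 / real (Suc n) < e / (2 * (norm x + 1))"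
      using small_inv_suc by blast
    show "\<exists>M. \<forall>m\<ge>M. \<forall>n\<ge>M. dist (P m x) (P n x) < e"
    proof (intro exI allI impI)
      fix m n assume mn: "N \<le> m" "N \<le> n"
      have "dist (P m x) (P n x) \<le> (1 / Suc m + 1 / Suc n) * norm x" unfolding dist_norm by (rule Pd)
      also have "\<dots> \<le> (e / (2 * (norm x + 1)) + e / (2 * (norm x + 1))) * norm x"
        using N[OF mn(1)] N[OF mn(2)] by (intro mult_right_mono) auto
      also have "\<dots> = e * (norm x / (norm x + 1))"
      proof -
        have "e / (2 * (norm x + 1)) = (e / (norm x + 1)) / 2" by simp
        then have "e / (2 * (norm x + 1)) + e / (2 * (norm x + 1)) = e / (norm x + 1)"
          by (simp only: field_sum_of_halves)
        then show ?thesis by simp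
      qed
      also have "\<dots> < e"
      proof -
        have "norm x / (norm x + 1) < 1" using \<open>0 < norm x + 1\<close> by (simp add: divide_less_eq)
        from mult_strict_left_mono[OF this e] show ?thesis by simp
      qed
      finally show "dist (P m x) (P n x) < e" .
    qed
  qed
  then have "convergent (\<lambda>n. P n x)" for x using Cauchy_convergent_iff by blast
  then obtain S where PS: "\<And>x. (\<lambda>n. P n x) \<longlonglongrightarrow> S x"
    unfolding convergent_def by metis
  have PSb: "norm (P n x - S x) \<le> (1 / Suc n) * norm x" for n x
  proof -
    have l1: "(\<lambda>m. norm (P n x - P m x)) \<longlonglongrightarrow> norm (P n x - S x)"
      by (intro tendsto_intros PS)
    have l2: "(\<lambda>m. (1 / Suc n + 1 / Suc m) * norm x) \<longlonglongrightarrow> (1 / Suc n + 0) * norm x"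
      by (intro tendsto_intros LIMSEQ_inverse_real_of_nat[unfolded inverse_eq_divide])
    show ?thesis using LIMSEQ_le[OF l1 l2] Pd by simp
  qed
  have Sadd: "S (x + y) = S x + S y" for x y
  proof -
    have "(\<lambda>n. P n x + P n y) \<longlonglongrightarrow> S x + S y" by (intro tendsto_intros PS)
    moreover have "(\<lambda>n. P n x + P n y) = (\<lambda>n. P n (x + y))" by (simp add: bco_add[OF bP])
    ultimately have "(\<lambda>n. P n (x + y)) \<longlonglongrightarrow> S x + S y" by simp
    then show ?thesis using PS LIMSEQ_unique by blast
  qed
  have Ssc: "S (scaleC c x) = scaleC c (S x)" for c x
  proof -
    have bl: "bounded_linear (\<lambda>v::'a. scaleC c v)" by (rule bco_bounded_linear[OF bco_scaleC_op[OF bco_id]])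
    have "(\<lambda>n. scaleC c (P n x)) \<longlonglongrightarrow> scaleC c (S x)" by (rule bounded_linear.tendsto[OF bl PS])
    moreover have "(\<lambda>n. scaleC c (P n x)) = (\<lambda>n. P n (scaleC c x))" by (simp add: bco_scaleC[OF bP])
    ultimately have "(\<lambda>n. P n (scaleC c x)) \<longlonglongrightarrow> scaleC c (S x)" by simp
    then show ?thesis using PS LIMSEQ_unique by blast
  qed
  have Sb: "norm (S x) \<le> (onorm (P 0) + 1) * norm x" for x
  proof -
    have "norm (S x) \<le> norm (P 0 x) + norm (P 0 x - S x)"
      using tri2[of "S x" 0 "P 0 x"] by (simp add: norm_minus_commute)
    also have "\<dots> \<le> onorm (P 0) * norm x + 1 * norm x"
      using PSb[of 0 x] by (intro add_mono bco_norm[OF bP]) simp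
    finally show ?thesis by (simp add: algebra_simps)
  qed
  have bS: "bounded_clinear_op S" by (rule bco_intro[OF Sadd Ssc Sb])
  have "fc T f S"
    unfolding fc_def
  proof (intro conjI bS allI impI)
    fix q :: "nat \<Rightarrow> real poly"
    assume ul: "uniform_limit {0..onorm T} (\<lambda>n t. poly (q n) t) f sequentially"
    show "(\<lambda>n. onorm (\<lambda>x. op_poly (q n) T x - S x)) \<longlonglongrightarrow> 0"
    proof (rule ops_conv_zero)
      fix n show "bounded_clinear_op (\<lambda>x. op_poly (q n) T x - S x)"
        by (intro bco_minus_op op_poly_bco[OF bT] bS)
    next
      fix e :: real assume e: "0 < e"
      obtain k where k: "1 / real (Suc k) < e / 3"
        using small_inv_suc[of "e/3"] e by auto
      have ev: "\<forall>\<^sub>F n in sequentially. \<forall>t\<in>{0..onorm T}. dist (poly (q n) t) (f t) < e / 3"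
      proof -
        have "0 < e / 3" using e by simp
        with ul show ?thesis unfolding uniform_limit_iff by blast
      qed
      show "\<forall>\<^sub>F n in sequentially. \<forall>x. norm (op_poly (q n) T x - S x) \<le> e * norm x"
      proof (rule eventually_mono[OF ev], intro allI)
        fix n x assume hn: "\<forall>t\<in>{0..onorm T}. dist (poly (q n) t) (f t) < e / 3"
        have "norm (op_poly (q n) T x - P k x) \<le> (e / 3 + 1 / Suc k) * norm x"
          unfolding P_def
          by (rule poly_diff_bound) (use hn p in \<open>auto simp: dist_real_def intro: less_imp_le\<close>)
        moreover have "norm (P k x - S x) \<le> (1 / Suc k) * norm x" by (rule PSb)
        ultimately have "norm (op_poly (q n) T x - S x) \<le> (e / 3 + 1 / Suc k) * norm x + (1 / Suc k) * norm x"
          using tri2[of "op_poly (q n) T x" "S x" "P k x"] by linarith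
        also have "\<dots> \<le> (e / 3 + e / 3) * norm x + (e / 3) * norm x"
          using k by (intro add_mono mult_right_mono) auto
        also have "\<dots> = e * norm x" by simp
        finally show "norm (op_poly (q n) T x - S x) \<le> e * norm x" .
      qed
    qed
  qed
  then show ?thesis by blast
qed

lemma fc_unique:
  assumes "fc T f S1" "fc T f S2"
  shows "S1 = S2"
proof -
  obtain p where p: "\<And>n t. t \<in> {0..onorm T} \<Longrightarrow> \<bar>poly (p n) t - f t\<bar> < 1 / Suc n"
    using weier_seq[OF cf] by blast
  have ul: "uniform_limit {0..onorm T} (\<lambda>n t. poly (p n) t) f sequentially"
    by (rule seq_ulim) (rule p)
  have bS1: "bounded_clinear_op S1" and bS2: "bounded_clinear_op S2" using assms by (simp_all add: fc_def)
  have l1: "(\<lambda>n. onorm (\<lambda>x. op_poly (p n) T x - S1 x)) \<longlonglongrightarrow> 0" using assms(1) ul by (simp add: fc_def)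
  have l2: "(\<lambda>n. onorm (\<lambda>x. op_poly (p n) T x - S2 x)) \<longlonglongrightarrow> 0" using assms(2) ul by (simp add: fc_def)
  have "S1 x = S2 x" for x
  proof -
    have b: "norm (S1 x - S2 x) \<le> (onorm (\<lambda>x. op_poly (p n) T x - S1 x) + onorm (\<lambda>x. op_poly (p n) T x - S2 x)) * norm x" for n
    proof -
      have "norm (S1 x - S2 x) \<le> norm (op_poly (p n) T x - S1 x) + norm (op_poly (p n) T x - S2 x)"
        using tri2[of "S1 x" "S2 x" "op_poly (p n) T x"] by (simp add: norm_minus_commute)
      also have "\<dots> \<le> onorm (\<lambda>x. op_poly (p n) T x - S1 x) * norm x + onorm (\<lambda>x. op_poly (p n) T x - S2 x) * norm x"
        by (intro add_mono bco_norm[of "\<lambda>x. op_poly (p n) T x - _ x", simplified]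
            bco_minus_op op_poly_bco[OF bT] bS1 bS2)
      finally show ?thesis by (simp add: algebra_simps)
    qed
    have "(\<lambda>n. (onorm (\<lambda>x. op_poly (p n) T x - S1 x) + onorm (\<lambda>x. op_poly (p n) T x - S2 x)) * norm x) \<longlonglongrightarrow> (0 + 0) * norm x"
      by (intro tendsto_intros l1 l2)
    then have "norm (S1 x - S2 x) \<le> (0 + 0) * norm x"
      by (rule LIMSEQ_le_const) (use b in blast)
    then have "norm (S1 x - S2 x) \<le> 0" by simp
    then show ?thesis by simp
  qed
  then show ?thesis by (rule ext)
qed

lemma fc_The: "fc T f (The (fc T f))"
proof -
  obtain S where S: "fc T f S" using fc_exists by blast
  show ?thesis by (rule theI[of "fc T f" S, OF S]) (rule fc_unique[OF _ S])
qed

lemma fc_approx: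
  assumes S: "fc T f S" and e: "0 < e"
  shows "\<exists>p. (\<forall>t. 0 \<le> t \<and> t \<le> onorm T \<longrightarrow> \<bar>poly p t - f t\<bar> \<le> e) \<and> (\<forall>x. norm (op_poly p T x - S x) \<le> e * norm x)"
proof -
  obtain p where p: "\<And>n t. t \<in> {0..onorm T} \<Longrightarrow> \<bar>poly (p n) t - f t\<bar> < 1 / Suc n"
    using weier_seq[OF cf] by blast
  have ul: "uniform_limit {0..onorm T} (\<lambda>n t. poly (p n) t) f sequentially"
    by (rule seq_ulim) (rule p)
  have bS: "bounded_clinear_op S" using S by (simp add: fc_def)
  have l: "(\<lambda>n. onorm (\<lambda>x. op_poly (p n) T x - S x)) \<longlonglongrightarrow> 0" using S ul by (simp add: fc_def)
  then obtain N1 where N1: "\<And>n. N1 \<le> n \<Longrightarrow> norm (onorm (\<lambda>x. op_poly (p n) T x - S x) - 0) < e"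
    using LIMSEQ_D e by blast
  obtain N2 where N2: "\<And>n. N2 \<le> n \<Longrightarrow> 1 / real (Suc n) < e" using small_inv_suc[OF e] by blast
  define n where "n = max N1 N2"
  have o: "onorm (\<lambda>x. op_poly (p n) T x - S x) \<le> e" using N1[of n] by (simp add: n_def)
  have c1: "\<forall>t. 0 \<le> t \<and> t \<le> onorm T \<longrightarrow> \<bar>poly (p n) t - f t\<bar> \<le> e"
    using p[of _ n] N2[of n] by (force simp: n_def)
  have "norm (op_poly (p n) T x - S x) \<le> e * norm x" for x
  proof -
    have "norm (op_poly (p n) T x - S x) \<le> onorm (\<lambda>x. op_poly (p n) T x - S x) * norm x"
      by (rule bco_norm[of "\<lambda>x. op_poly (p n) T x - S x", simplified])
         (intro bco_minus_op op_poly_bco[OF bT] bS)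
    also have "\<dots> \<le> e * norm x" using o by (simp add: mult_right_mono)
    finally show ?thesis .
  qed
  with c1 show ?thesis by blast
qed

lemma fc_sa:
  assumes S: "fc T f S"
  shows "sa S"
  unfolding sa_def
proof (intro allI)
  fix x y
  have sP: "sa (op_poly p T)" for p using op_poly_sa[OF bT] pT by (simp add: posop_def)
  have "cmod (cinner (S x) y - cinner x (S y)) \<le> 0"
  proof (rule small_le_zero[where C="2 * norm x * norm y"])
    fix e :: real assume e: "0 < e" "e < 1"
    obtain p where p: "\<And>x. norm (op_poly p T x - S x) \<le> e * norm x" using fc_approx[OF S e(1)] by blast
    have "cinner (S x) y - cinner x (S y) = cinner (S x - op_poly p T x) y + cinner x (op_poly p T y - S y)"
      using sP[of p] by (simp add: cinner_diff_left cinner_diff_right sa_def)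
    then have "cmod (cinner (S x) y - cinner x (S y)) \<le> cmod (cinner (S x - op_poly p T x) y) + cmod (cinner x (op_poly p T y - S y))"
      by (simp add: norm_triangle_ineq)
    also have "\<dots> \<le> norm (S x - op_poly p T x) * norm y + norm x * norm (op_poly p T y - S y)"
      by (intro add_mono cauchy_schwarz)
    also have "\<dots> \<le> (e * norm x) * norm y + norm x * (e * norm y)"
      using p[of x] p[of y] by (intro add_mono mult_right_mono mult_left_mono) (auto simp: norm_minus_commute)
    finally show "cmod (cinner (S x) y - cinner x (S y)) \<le> e * (2 * norm x * norm y)" by (simp add: algebra_simps)
  qed
  then show "cinner (S x) y = cinner x (S y)" by simp
qed

lemma fc_pos:
  assumes S: "fc T f S" and f0: "\<And>t. 0 \<le> t \<Longrightarrow> t \<le> onorm T \<Longrightarrow> 0 \<le> f t"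
  shows "0 \<le> Re (cinner (S x) x)"
proof -
  have "- Re (cinner (S x) x) \<le> 0"
  proof (rule small_le_zero[where C="2 * (norm x)\<^sup>2"])
    fix e :: real assume e: "0 < e" "e < 1"
    obtain p where p1: "\<And>t. 0 \<le> t \<and> t \<le> onorm T \<Longrightarrow> \<bar>poly p t - f t\<bar> \<le> e"
      and p2: "\<And>x. norm (op_poly p T x - S x) \<le> e * norm x" using fc_approx[OF S e(1)] by blast
    have "- e * (norm x)\<^sup>2 \<le> Re (cinner (op_poly p T x) x)"
    proof (rule poly_pos_bound[OF pT])
      fix t assume t: "0 \<le> t" "t \<le> onorm T"
      show "- e \<le> poly p t" using p1[of t] f0[OF t] t by (auto simp: abs_le_iff)
    qed (use e in simp)
    moreover have "\<bar>Re (cinner (op_poly p T x - S x) x)\<bar> \<le> e * (norm x)\<^sup>2"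
    proof -
      have "\<bar>Re (cinner (op_poly p T x - S x) x)\<bar> \<le> cmod (cinner (op_poly p T x - S x) x)" by (rule abs_Re_le_cmod)
      also have "\<dots> \<le> norm (op_poly p T x - S x) * norm x" by (rule cauchy_schwarz)
      also have "\<dots> \<le> e * norm x * norm x" by (intro mult_right_mono p2) simp
      finally show ?thesis by (simp add: power2_eq_square mult.assoc)
    qed
    moreover have "Re (cinner (op_poly p T x - S x) x) = Re (cinner (op_poly p T x) x) - Re (cinner (S x) x)"
      by (simp add: cinner_diff_left)
    ultimately show "- Re (cinner (S x) x) \<le> e * (2 * (norm x)\<^sup>2)" by (simp add: abs_le_iff)
  qed
  then show ?thesis by simp
qed

lemma fc_eig:
  assumes S: "fc T f S" and l: "0 \<le> l" "l \<le> onorm T" and e: "0 < e"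
  shows "\<exists>\<eta>>0. \<forall>x. norm (T x - scaleR l x) \<le> \<eta> * norm x \<longrightarrow> norm (S x - scaleR (f l) x) \<le> e * norm x"
proof -
  obtain p where p1: "\<And>t. 0 \<le> t \<and> t \<le> onorm T \<Longrightarrow> \<bar>poly p t - f t\<bar> \<le> e / 3"
    and p2: "\<And>x. norm (op_poly p T x - S x) \<le> e / 3 * norm x" using fc_approx[OF S, of "e/3"] e by auto
  have "poly (p - [:poly p l:]) l = 0" by simp
  then obtain q where pq: "p - [:poly p l:] = [:- l, 1:] * q" using poly_eq_0_iff_dvd by (metis dvdE)
  define C where "C = onorm (op_poly q T)"
  have C0: "0 \<le> C" unfolding C_def by (rule bco_onorm_nonneg[OF op_poly_bco[OF bT]])
  have lin: "op_poly [:- l, 1:] T x = T x - scaleR l x" for x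
    by (simp add: op_poly_pCons[OF bT] bco_zero[OF bT] bco_scaleR[OF bT] op_poly_def)
  have key: "op_poly p T x - scaleR (poly p l) x = op_poly q T (T x - scaleR l x)" for x
  proof -
    have "op_poly (p - [:poly p l:]) T x = op_poly ([:- l, 1:] * q) T x" by (simp only: pq)
    also have "\<dots> = op_poly q T (T x - scaleR l x)"
      by (simp only: mult.commute[of "[:- l, 1:]" q] op_poly_mult[OF bT] lin)
    finally show ?thesis by (simp add: op_poly_diff[OF bT] op_poly_const[OF bT])
  qed
  define \<eta> where "\<eta> = e / 3 / (C + 1)"
  have eta: "0 < \<eta>" using e C0 by (simp add: \<eta>_def)
  show ?thesis
  proof (intro exI[of _ \<eta>] conjI allI impI eta)
    fix x assume hx: "norm (T x - scaleR l x) \<le> \<eta> * norm x"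
    have a: "norm (S x - op_poly p T x) \<le> e / 3 * norm x" using p2[of x] by (simp add: norm_minus_commute)
    have "norm (op_poly p T x - scaleR (poly p l) x) \<le> C * norm (T x - scaleR l x)"
      unfolding key C_def by (rule bco_norm[OF op_poly_bco[OF bT]])
    also have "\<dots> \<le> C * (\<eta> * norm x)" by (intro mult_left_mono hx C0)
    also have "\<dots> \<le> e / 3 * norm x"
    proof -
      have "C * \<eta> \<le> e / 3" using C0 e by (simp add: \<eta>_def field_simps)
      then have "C * \<eta> * norm x \<le> e / 3 * norm x" by (rule mult_right_mono) simp
      then show ?thesis by (simp add: mult.assoc)
    qed
    finally have b: "norm (op_poly p T x - scaleR (poly p l) x) \<le> e / 3 * norm x" .
    have c: "norm (scaleR (poly p l) x - scaleR (f l) x) \<le> e / 3 * norm x"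
    proof -
      have "\<bar>poly p l - f l\<bar> \<le> e / 3" using p1[of l] l by simp
      then have "\<bar>poly p l - f l\<bar> * norm x \<le> e / 3 * norm x" by (rule mult_right_mono) simp
      moreover have "norm (scaleR (poly p l) x - scaleR (f l) x) = \<bar>poly p l - f l\<bar> * norm x"
        by (simp add: scaleR_diff_left[symmetric])
      ultimately show ?thesis by simp
    qed
    have "norm (S x - scaleR (f l) x) \<le> norm (S x - op_poly p T x) + norm (op_poly p T x - scaleR (poly p l) x)
          + norm (scaleR (poly p l) x - scaleR (f l) x)"
      by (rule tri3)
    also have "\<dots> \<le> e / 3 * norm x + e / 3 * norm x + e / 3 * norm x" using a b c by linarith
    finally show "norm (S x - scaleR (f l) x) \<le> e * norm x" by simp
  qed
qed

lemma fc_sq: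
  assumes S: "fc T f S" and fsq: "\<And>t. 0 \<le> t \<Longrightarrow> t \<le> onorm T \<Longrightarrow> f t * f t = t"
  shows "S (S x) = T x"
proof -
  have bS: "bounded_clinear_op S" using S by (simp add: fc_def)
  obtain F where F0: "F \<ge> 0" and F: "\<And>t. t \<in> {0..onorm T} \<Longrightarrow> \<bar>f t\<bar> \<le> F"
  proof -
    have "compact (f ` {0..onorm T})" by (intro compact_continuous_image cf) simp
    then obtain K where K: "\<forall>y\<in>f ` {0..onorm T}. norm y \<le> K"
      using compact_imp_bounded bounded_iff by metis
    show ?thesis
    proof (rule that[of "max K 0"])
      fix t assume "t \<in> {0..onorm T}"
      then have "\<bar>f t\<bar> \<le> K" using K by auto
      then show "\<bar>f t\<bar> \<le> max K 0" by simp
    qed simp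
  qed
  define C where "C = onorm S + (onorm S + 1) + (2 * F + 1)"
  have "norm (S (S x) - T x) \<le> 0"
  proof (rule small_le_zero[where C="C * norm x"])
    fix e :: real assume e: "0 < e" "e < 1"
    obtain p where p1: "\<And>t. 0 \<le> t \<and> t \<le> onorm T \<Longrightarrow> \<bar>poly p t - f t\<bar> \<le> e"
      and p2: "\<And>x. norm (op_poly p T x - S x) \<le> e * norm x" using fc_approx[OF S e(1)] by blast
    define P where "P = op_poly p T"
    have bP: "bounded_clinear_op P" unfolding P_def by (rule op_poly_bco[OF bT])
    have Px: "norm (P x) \<le> (onorm S + 1) * norm x"
    proof -
      have "norm (P x) \<le> norm (S x) + norm (P x - S x)" using tri2[of "P x" 0 "S x"] by simp
      also have "\<dots> \<le> onorm S * norm x + e * norm x" using p2[of x] by (intro add_mono bco_norm[OF bS]) (simp add: P_def)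
      also have "\<dots> \<le> (onorm S + 1) * norm x"
      proof -
        have "e * norm x \<le> 1 * norm x" using e by (intro mult_right_mono) auto
        then show ?thesis by (simp add: algebra_simps)
      qed
      finally show ?thesis .
    qed
    have d1: "norm (S (S x) - S (P x)) \<le> onorm S * (e * norm x)"
    proof -
      have "norm (S (S x) - S (P x)) = norm (S (S x - P x))" by (simp add: bco_diff[OF bS])
      also have "\<dots> \<le> onorm S * norm (S x - P x)" by (rule bco_norm[OF bS])
      also have "\<dots> \<le> onorm S * (e * norm x)"
        using p2[of x] by (intro mult_left_mono bco_onorm_nonneg[OF bS]) (simp_all add: P_def norm_minus_commute)
      finally show ?thesis .
    qed
    have d2: "norm (S (P x) - P (P x)) \<le> e * ((onorm S + 1) * norm x)"
    proof -
      have "norm (S (P x) - P (P x)) \<le> e * norm (P x)" using p2[of "P x"] by (simp add: P_def norm_minus_commute)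
      also have "\<dots> \<le> e * ((onorm S + 1) * norm x)" using Px e by (simp add: mult_left_mono)
      finally show ?thesis .
    qed
    have d3: "norm (P (P x) - T x) \<le> e * (2 * F + 1) * norm x"
    proof -
      have "P (P x) - T x = op_poly (p * p - [:0, 1:]) T x"
        by (simp add: P_def op_poly_diff[OF bT] op_poly_mult[OF bT] op_poly_X[OF bT])
      moreover have "norm (op_poly (p * p - [:0, 1:]) T x) \<le> e * (2 * F + 1) * norm x"
      proof (rule poly_norm_bound[OF pT])
        show "0 \<le> e * (2 * F + 1)" using e F0 by simp
      next
        fix t assume t: "0 \<le> t" "t \<le> onorm T"
        have a: "\<bar>poly p t - f t\<bar> \<le> e" using p1 t by simp
        have b: "\<bar>poly p t + f t\<bar> \<le> 2 * F + 1"
        proof -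
          have "\<bar>poly p t + f t\<bar> \<le> \<bar>poly p t - f t\<bar> + 2 * \<bar>f t\<bar>" by linarith
          also have "\<dots> \<le> e + 2 * F" using a F[of t] t by simp
          finally show ?thesis using e by simp
        qed
        have "poly (p * p - [:0, 1:]) t = (poly p t - f t) * (poly p t + f t)"
          using fsq[OF t] by (simp add: algebra_simps)
        then have "\<bar>poly (p * p - [:0, 1:]) t\<bar> = \<bar>poly p t - f t\<bar> * \<bar>poly p t + f t\<bar>" by (simp add: abs_mult)
        also have "\<dots> \<le> e * (2 * F + 1)" using a b by (intro mult_mono) auto
        finally show "\<bar>poly (p * p - [:0, 1:]) t\<bar> \<le> e * (2 * F + 1)" .
      qed
      ultimately show ?thesis by simp
    qed
    have "norm (S (S x) - T x) \<le> norm (S (S x) - S (P x)) + norm (S (P x) - P (P x)) + norm (P (P x) - T x)"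
      by (rule tri3)
    also have "\<dots> \<le> onorm S * (e * norm x) + e * ((onorm S + 1) * norm x) + e * (2 * F + 1) * norm x"
      using d1 d2 d3 by linarith
    also have "\<dots> = e * (C * norm x)" by (simp add: C_def algebra_simps)
    finally show "norm (S (S x) - T x) \<le> e * (C * norm x)" .
  qed
  then show ?thesis by simp
qed

end

section \<open>Real powers\<close>

lemma powr_cont: "0 < r \<Longrightarrow> continuous_on {0..M} (\<lambda>t::real. t powr r)"
  by (rule continuous_on_powr') (auto intro: continuous_intros)

context
  fixes T :: "'a::chilbert_space \<Rightarrow> 'a" and r :: real
  assumes pT: "posop T" and r: "0 < r"
begin

lemma opow_fcp: "fc T (\<lambda>t. t powr r) (opow T r)"
  unfolding opow_fc by (rule fc_The[OF pT powr_cont[OF r]])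

lemma opow_posop: "posop (opow T r)"
  unfolding posop_def
proof (intro conjI allI)
  show "bounded_clinear_op (opow T r)" using opow_fcp by (simp add: fc_def)
  show "sa (opow T r)" by (rule fc_sa[OF pT powr_cont[OF r] opow_fcp])
  fix x show "0 \<le> Re (cinner (opow T r x) x)"
    by (rule fc_pos[OF pT powr_cont[OF r] opow_fcp]) simp
qed

lemma opow_eig:
  assumes l: "0 \<le> l" "l \<le> onorm T" and e: "0 < e"
  shows "\<exists>\<eta>>0. \<forall>x. norm (T x - scaleR l x) \<le> \<eta> * norm x \<longrightarrow>
            norm (opow T r x - scaleR (l powr r) x) \<le> e * norm x"
  by (rule fc_eig[OF pT powr_cont[OF r] opow_fcp l e])

end

lemma opow_half_sq:
  fixes T :: "'a::chilbert_space \<Rightarrow> 'a"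
  assumes pT: "posop T"
  shows "opow T (1/2) (opow T (1/2) x) = T x"
proof (rule fc_sq[OF pT powr_cont opow_fcp[OF pT]])
  fix t :: real assume "0 \<le> t"
  then show "t powr (1/2) * t powr (1/2) = t" by (simp add: powr_half_sqrt)
qed simp_all

lemma gencs:
  fixes R :: "'a::chilbert_space \<Rightarrow> 'a"
  assumes pR: "posop R"
  shows "(norm (R x))\<^sup>2 \<le> onorm R * Re (cinner (R x) x)"
proof -
  define S where "S = opow R (1/2)"
  have pS: "posop S" unfolding S_def by (rule opow_posop[OF pR]) simp
  have sq: "S (S y) = R y" for y unfolding S_def by (rule opow_half_sq[OF pR])
  have Sb: "(norm (S y))\<^sup>2 \<le> onorm R * (norm y)\<^sup>2" for y
  proof -
    have "(norm (S y))\<^sup>2 = Re (cinner (S (S y)) y)"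
      using pS by (simp add: norm_sq_cinner posop_def sa_def)
    also have "\<dots> = Re (cinner (R y) y)" by (simp add: sq)
    also have "\<dots> \<le> onorm R * (norm y)\<^sup>2" by (rule posop_bound[OF pR])
    finally show ?thesis .
  qed
  have "(norm (R x))\<^sup>2 = (norm (S (S x)))\<^sup>2" by (simp add: sq)
  also have "\<dots> \<le> onorm R * (norm (S x))\<^sup>2" by (rule Sb)
  also have "(norm (S x))\<^sup>2 = Re (cinner (R x) x)"
    using pS by (simp add: norm_sq_cinner posop_def sa_def sq[symmetric])
  finally show ?thesis .
qed

lemma quad_homog:
  fixes Z :: "'a::complex_inner \<Rightarrow> 'a"
  assumes bZ: "bounded_clinear_op Z"
  shows "Re (cinner (Z (scaleR c x)) (scaleR c x)) = c\<^sup>2 * Re (cinner (Z x) x)"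
  by (simp add: bco_scaleR[OF bZ] cinner_scaleR_left cinner_scaleR_right power2_eq_square)

lemma loewner_half:
  fixes X Y :: "'a::chilbert_space \<Rightarrow> 'a"
  assumes pX: "posop X" and pY: "posop Y"
    and h: "\<And>x. (norm (Y x))\<^sup>2 \<le> (norm (X x))\<^sup>2"
  shows "Re (cinner (Y x0) x0) \<le> Re (cinner (X x0) x0)"
proof (rule ccontr)
  assume "\<not> ?thesis"
  then have neg0: "Re (cinner (X x0) x0) - Re (cinner (Y x0) x0) < 0" by simp
  have bX: "bounded_clinear_op X" and bY: "bounded_clinear_op Y" and sX: "sa X" and sY: "sa Y"
    using pX pY by (simp_all add: posop_def)
  have X0: "0 \<le> Re (cinner (X x) x)" for x using pX by (simp add: posop_def)
  have Y0: "0 \<le> Re (cinner (Y x) x)" for x using pY by (simp add: posop_def)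
  define Z where "Z x = X x - Y x" for x
  have bZ: "bounded_clinear_op Z" unfolding Z_def[abs_def] by (rule bco_minus_op[OF bX bY])
  have ReZ: "Re (cinner (Z x) x) = Re (cinner (X x) x) - Re (cinner (Y x) x)" for x
    by (simp add: Z_def cinner_diff_left)
  have x00: "x0 \<noteq> 0" using neg0 by auto
  define u0 where "u0 = scaleR (1 / norm x0) x0"
  have u0: "norm u0 = 1" using x00 by (simp add: u0_def)
  have "Re (cinner (Z u0) u0) = (1 / norm x0)\<^sup>2 * Re (cinner (Z x0) x0)"
    unfolding u0_def by (rule quad_homog[OF bZ])
  also have "\<dots> < 0" using neg0 x00 by (simp add: ReZ mult_pos_neg)
  finally have u0neg: "Re (cinner (Z u0) u0) < 0" .
  define U where "U = {Re (cinner (Z x) x) | x. norm x = 1}"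
  have Uz: "Re (cinner (Z u0) u0) \<in> U" using u0 by (auto simp: U_def)
  have Ulow: "- onorm Z \<le> v" if vU: "v \<in> U" for v
  proof -
    obtain x where x: "norm x = 1" "v = Re (cinner (Z x) x)" using vU by (auto simp: U_def)
    have "\<bar>Re (cinner (Z x) x)\<bar> \<le> cmod (cinner (Z x) x)" by (rule abs_Re_le_cmod)
    also have "\<dots> \<le> norm (Z x) * norm x" by (rule cauchy_schwarz)
    also have "\<dots> \<le> onorm Z" using bco_norm[OF bZ, of x] x(1) by simp
    finally show ?thesis using x(2) by linarith
  qed
  have bddU: "bdd_below U" using Ulow by (intro bdd_belowI) blast
  define m where "m = Inf U"
  have mle: "m \<le> v" if "v \<in> U" for v unfolding m_def by (rule cInf_lower[OF that bddU])
  have m0: "m < 0" using mle[OF Uz] u0neg by linarith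
  define \<mu> where "\<mu> = - m"
  have mu0: "0 < \<mu>" using m0 by (simp add: \<mu>_def)
  have lowZ: "m * (norm x)\<^sup>2 \<le> Re (cinner (Z x) x)" for x
  proof (cases "x = 0")
    case True then show ?thesis using bZ by simp
  next
    case False
    define u where "u = scaleR (1 / norm x) x"
    have u: "norm u = 1" using False by (simp add: u_def)
    have xu: "x = scaleR (norm x) u" using False by (simp add: u_def)
    have "m \<le> Re (cinner (Z u) u)" using u by (intro mle) (auto simp: U_def)
    then have "m * (norm x)\<^sup>2 \<le> Re (cinner (Z u) u) * (norm x)\<^sup>2" by (rule mult_right_mono) simp
    then have "m * (norm x)\<^sup>2 \<le> (norm x)\<^sup>2 * Re (cinner (Z u) u)" by (simp add: mult.commute)
    also have "\<dots> = Re (cinner (Z x) x)" by (subst (2 3) xu) (simp add: quad_homog[OF bZ])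
    finally show ?thesis .
  qed
  define R where "R x = Z x + scaleR \<mu> x" for x
  have bR: "bounded_clinear_op R" unfolding R_def[abs_def] by (intro bco_plus bZ bco_scaleR_op bco_id)
  have ReR: "Re (cinner (R x) x) = Re (cinner (Z x) x) + \<mu> * (norm x)\<^sup>2" for x
    by (simp add: R_def cinner_add_left cinner_scaleR_left norm_sq_cinner)
  have pR: "posop R"
    unfolding posop_def
  proof (intro conjI allI bR)
    show "sa R" using sX sY by (simp add: sa_def R_def Z_def cinner_add_left cinner_add_right
          cinner_diff_left cinner_diff_right cinner_scaleR_left cinner_scaleR_right)
    fix x show "0 \<le> Re (cinner (R x) x)" using lowZ[of x] by (simp add: ReR \<mu>_def)
  qed
  define K where "K = onorm R"
  have K0: "0 \<le> K" unfolding K_def by (rule bco_onorm_nonneg[OF bR])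
  define w where "w = onorm X + onorm Y"
  have w0: "0 \<le> w" using bco_onorm_nonneg[OF bX] bco_onorm_nonneg[OF bY] by (simp add: w_def)
  define \<eta> where "\<eta> = min (\<mu> / 2) (\<mu> ^ 4 / (4 * (w\<^sup>2 * K + 1)))"
  have den: "0 < 4 * (w\<^sup>2 * K + 1)" using K0 by (simp add: add_nonneg_pos)
  have eta0: "0 < \<eta>" using mu0 den by (simp add: \<eta>_def)
  have "m < m + \<eta>" using eta0 by simp
  then obtain v where "v \<in> U" "v < m + \<eta>"
    using cInf_lessD[of U "m + \<eta>"] Uz unfolding m_def by blast
  then obtain x where x: "norm x = 1" "Re (cinner (Z x) x) < m + \<eta>" by (auto simp: U_def)
  have Rsmall: "Re (cinner (R x) x) \<le> \<eta>" using x by (simp add: ReR \<mu>_def)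
  have Rx2: "(norm (R x))\<^sup>2 \<le> K * \<eta>"
  proof -
    have "(norm (R x))\<^sup>2 \<le> K * Re (cinner (R x) x)" unfolding K_def by (rule gencs[OF pR])
    also have "\<dots> \<le> K * \<eta>" by (intro mult_left_mono Rsmall K0)
    finally show ?thesis .
  qed
  define W where "W = X x + Y x"
  have ident: "Re (cinner W (Z x)) = (norm (X x))\<^sup>2 - (norm (Y x))\<^sup>2"
  proof -
    have "Re (cinner (Y x) (X x)) = Re (cinner (X x) (Y x))" by (subst cinner_commute) simp
    then show ?thesis
      by (simp add: W_def Z_def cinner_add_left cinner_diff_right norm_sq_cinner)
  qed
  have Zx: "Z x = R x - scaleR \<mu> x" by (simp add: R_def)
  have "Re (cinner W (Z x)) = Re (cinner W (R x)) - \<mu> * Re (cinner W x)"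
    by (simp add: Zx cinner_diff_right cinner_scaleR_right)
  moreover have "0 \<le> Re (cinner W (Z x))" using ident h[of x] by simp
  ultimately have muW: "\<mu> * Re (cinner W x) \<le> Re (cinner W (R x))" by simp
  have nW: "norm W \<le> w"
  proof -
    have "norm W \<le> norm (X x) + norm (Y x)" unfolding W_def by (rule norm_triangle_ineq)
    also have "\<dots> \<le> onorm X + onorm Y"
      using bco_norm[OF bX, of x] bco_norm[OF bY, of x] x(1) by simp
    finally show ?thesis by (simp add: w_def)
  qed
  have "Re (cinner W (R x)) \<le> w * norm (R x)"
  proof -
    have "Re (cinner W (R x)) \<le> cmod (cinner W (R x))" by (rule complex_Re_le_cmod)
    also have "\<dots> \<le> norm W * norm (R x)" by (rule cauchy_schwarz)
    also have "\<dots> \<le> w * norm (R x)" by (intro mult_right_mono nW) simp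
    finally show ?thesis .
  qed
  with muW have muW2: "\<mu> * Re (cinner W x) \<le> w * norm (R x)" by linarith
  have ReW: "Re (cinner W x) = Re (cinner (X x) x) + Re (cinner (Y x) x)"
    by (simp add: W_def cinner_add_left)
  have "\<mu> / 2 < Re (cinner W x)"
  proof -
    have "Re (cinner (Z x) x) < \<eta> - \<mu>" using x(2) by (simp add: \<mu>_def)
    moreover have "\<eta> \<le> \<mu> / 2" unfolding \<eta>_def by (rule min.cobounded1)
    ultimately show ?thesis using ReZ[of x] ReW X0[of x] by linarith
  qed
  then have "\<mu> * (\<mu> / 2) < \<mu> * Re (cinner W x)" using mu0 by simp
  with muW2 have lt: "\<mu>\<^sup>2 / 2 < w * norm (R x)" by (simp add: power2_eq_square)
  have "(\<mu>\<^sup>2 / 2)\<^sup>2 < (w * norm (R x))\<^sup>2"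
    by (rule power_strict_mono[OF lt]) simp_all
  also have "\<dots> = w\<^sup>2 * (norm (R x))\<^sup>2" by (simp add: power_mult_distrib)
  also have "\<dots> \<le> w\<^sup>2 * (K * \<eta>)" by (intro mult_left_mono Rx2) simp
  also have "\<dots> \<le> w\<^sup>2 * K * (\<mu> ^ 4 / (4 * (w\<^sup>2 * K + 1)))"
  proof -
    have "\<eta> \<le> \<mu> ^ 4 / (4 * (w\<^sup>2 * K + 1))" unfolding \<eta>_def by (rule min.cobounded2)
    then have "w\<^sup>2 * K * \<eta> \<le> w\<^sup>2 * K * (\<mu> ^ 4 / (4 * (w\<^sup>2 * K + 1)))"
      by (rule mult_left_mono) (use K0 in simp)
    then show ?thesis by (simp add: mult.assoc)
  qed
  also have "\<dots> < \<mu> ^ 4 / 4"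
  proof -
    have "w\<^sup>2 * K * \<mu> ^ 4 < (w\<^sup>2 * K + 1) * \<mu> ^ 4" using mu0 by (simp add: algebra_simps)
    then show ?thesis using den by (simp add: field_simps)
  qed
  finally show False by (simp add: power2_eq_square power4_eq_xxxx field_simps)
qed

lemma le_by_eps:
  fixes c d :: real
  assumes "\<And>\<eta>. 0 < \<eta> \<Longrightarrow> c - \<eta> \<le> d"
  shows "c \<le> d"
proof (rule ccontr)
  assume "\<not> c \<le> d"
  then have "0 < (c - d) / 2" by simp
  from assms[OF this] \<open>\<not> c \<le> d\<close> show False by (simp add: field_simps)
qed

lemma numrad_le:
  fixes A :: "'a::complex_inner \<Rightarrow> 'a"
  assumes bA: "bounded_clinear_op A"
  shows "numrad A \<le> onorm A" and "0 \<le> numrad A"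
proof -
  have el: "v \<le> onorm A" if vS: "v \<in> {0} \<union> {cmod (cinner (A x) x) | x. norm x = 1}" for v
  proof -
    consider "v = 0" | x where "norm x = 1" "v = cmod (cinner (A x) x)" using vS by blast
    then show ?thesis
    proof cases
      case 1 then show ?thesis using bco_onorm_nonneg[OF bA] by simp
    next
      case 2
      have "cmod (cinner (A x) x) \<le> norm (A x) * norm x" by (rule cauchy_schwarz)
      also have "\<dots> \<le> onorm A" using bco_norm[OF bA, of x] 2(1) by simp
      finally show ?thesis using 2(2) by simp
    qed
  qed
  show "numrad A \<le> onorm A" unfolding numrad_def by (rule cSup_least) (use el in auto)
  have "bdd_above ({0} \<union> {cmod (cinner (A x) x) | x. norm x = 1})"
    using el by (intro bdd_aboveI) blast
  then show "0 \<le> numrad A" unfolding numrad_def by (rule cSup_upper[rotated]) simp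
qed

lemma approx_eig_AstarA:
  fixes B :: "'a::chilbert_space \<Rightarrow> 'a"
  assumes bB: "bounded_clinear_op B" and x: "norm x = 1"
  shows "(norm (adj B (B x) - scaleR ((onorm B)\<^sup>2) x))\<^sup>2 \<le> (onorm B)\<^sup>2 * ((onorm B)\<^sup>2 - (norm (B x))\<^sup>2)"
proof -
  define a where "a = onorm B"
  have a0: "0 \<le> a" unfolding a_def by (rule bco_onorm_nonneg[OF bB])
  have i: "Re (cinner (adj B (B x)) (scaleR (a\<^sup>2) x)) = a\<^sup>2 * (norm (B x))\<^sup>2"
    using AstarA_pos(2)[OF bB, of x] by (simp add: cinner_scaleR_right)
  have n1: "norm (adj B (B x)) \<le> a * norm (B x)" using adj_bco(2)[OF bB] by (simp add: a_def)
  then have n2: "(norm (adj B (B x)))\<^sup>2 \<le> a\<^sup>2 * (norm (B x))\<^sup>2"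
    by (metis norm_ge_zero power_mono power_mult_distrib)
  have "(norm (adj B (B x) - scaleR (a\<^sup>2) x))\<^sup>2 = (norm (adj B (B x)))\<^sup>2 - 2 * (a\<^sup>2 * (norm (B x))\<^sup>2) + (a\<^sup>2)\<^sup>2"
    using x by (simp add: norm_diff_sq i)
  also have "\<dots> \<le> a\<^sup>2 * (a\<^sup>2 - (norm (B x))\<^sup>2)" using n2 by (simp add: power2_eq_square algebra_simps)
  finally show ?thesis by (simp add: a_def)
qed

lemma eig_onorm:
  fixes U :: "'a::complex_inner \<Rightarrow> 'a"
  assumes bU: "bounded_clinear_op U"
    and h: "\<And>e. 0 < e \<Longrightarrow> \<exists>x. norm x = 1 \<and> norm (U x - scaleR c x) \<le> e" and c: "0 \<le> c"
  shows "c \<le> onorm U"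
proof (rule le_by_eps)
  fix e :: real assume e: "0 < e"
  obtain x where x: "norm x = 1" "norm (U x - scaleR c x) \<le> e" using h[OF e] by blast
  have "c = norm (scaleR c x)" using x(1) c by simp
  also have "\<dots> \<le> norm (U x) + norm (U x - scaleR c x)" using tri2[of "scaleR c x" 0 "U x"] by (simp add: norm_minus_commute)
  also have "\<dots> \<le> onorm U + e" using bco_norm[OF bU, of x] x by simp
  finally show "c - e \<le> onorm U" by simp
qed

lemma lower_onorm:
  fixes U V :: "'a::complex_inner \<Rightarrow> 'a"
  assumes bU: "bounded_clinear_op U" and bV: "bounded_clinear_op V"
    and h: "\<And>e. 0 < e \<Longrightarrow> \<exists>x. norm x = 1 \<and> norm (U x - scaleR c x) \<le> e \<and> norm (V x - scaleR c x) \<le> e"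
    and c: "0 \<le> c"
  shows "2 * c \<le> onorm (\<lambda>x. U x + V x)"
proof (rule le_by_eps)
  fix e :: real assume e: "0 < e"
  obtain x where x: "norm x = 1" "norm (U x - scaleR c x) \<le> e / 2" "norm (V x - scaleR c x) \<le> e / 2"
    using h[of "e/2"] e by auto
  have "2 * c = norm (scaleR (2 * c) x)" using x(1) c by simp
  also have "\<dots> \<le> norm (U x + V x) + norm (scaleR (2 * c) x - (U x + V x))"
    using tri2[of "scaleR (2 * c) x" 0 "U x + V x"] by (simp add: norm_minus_commute)
  also have "norm (scaleR (2 * c) x - (U x + V x)) \<le> norm (U x - scaleR c x) + norm (V x - scaleR c x)"
  proof -
    have e2: "scaleR (2 * c) x = scaleR c x + scaleR c x" by (metis mult_2 scaleR_left_distrib)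
    have "scaleR (2 * c) x - (U x + V x) = - ((U x - scaleR c x) + (V x - scaleR c x))"
      unfolding e2 by (simp add: algebra_simps)
    then show ?thesis using norm_triangle_ineq[of "U x - scaleR c x" "V x - scaleR c x"]
      by (simp only: norm_minus_cancel)
  qed
  also have "norm (U x + V x) \<le> onorm (\<lambda>x. U x + V x)"
    using bco_norm[OF bco_plus[OF bU bV], of x] x(1) by simp
  finally show "2 * c - e \<le> onorm (\<lambda>x. U x + V x)" using x by linarith
qed

lemma pair_transfer:
  fixes T1 T2 :: "'a::chilbert_space \<Rightarrow> 'a"
  assumes p1: "posop T1" and p2: "posop T2" and r: "0 < r"
    and l: "0 \<le> l" "l \<le> onorm T1" "l \<le> onorm T2"
    and h: "\<And>\<eta>. 0 < \<eta> \<Longrightarrow> \<exists>x. norm x = 1 \<and> norm (T1 x - scaleR l x) \<le> \<eta> \<and> norm (T2 x - scaleR l x) \<le> \<eta>"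
    and e: "0 < e"
  shows "\<exists>x. norm x = 1 \<and> norm (opow T1 r x - scaleR (l powr r) x) \<le> e \<and> norm (opow T2 r x - scaleR (l powr r) x) \<le> e"
proof -
  obtain \<eta>1 where e1: "\<eta>1 > 0" and h1: "\<And>x. norm (T1 x - scaleR l x) \<le> \<eta>1 * norm x \<Longrightarrow>
       norm (opow T1 r x - scaleR (l powr r) x) \<le> e * norm x"
    using opow_eig[OF p1 r l(1,2) e] by blast
  obtain \<eta>2 where e2: "\<eta>2 > 0" and h2: "\<And>x. norm (T2 x - scaleR l x) \<le> \<eta>2 * norm x \<Longrightarrow>
       norm (opow T2 r x - scaleR (l powr r) x) \<le> e * norm x"
    using opow_eig[OF p2 r l(1,3) e] by blast
  obtain x where x: "norm x = 1" "norm (T1 x - scaleR l x) \<le> min \<eta>1 \<eta>2" "norm (T2 x - scaleR l x) \<le> min \<eta>1 \<eta>2"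
    using h[of "min \<eta>1 \<eta>2"] e1 e2 by auto
  show ?thesis
    by (rule exI[of _ x]) (use x h1[of x] h2[of x] in auto)
qed

theorem corollary2p6:
  fixes A :: "'a::chilbert_space \<Rightarrow> 'a"
  assumes "bounded_clinear_op A" and "hyponormal A"
  shows "(\<forall>r::real. 1 \<le> r \<and> r \<le> 2 \<longrightarrow>
            numrad A powr r \<le>
              1 / (2 * (1 + (xi_abs A)\<^sup>2 / 8) powr r) *
              onorm (\<lambda>x. opow (absop A) r x + opow (absop (adj A)) r x))
       \<and> numrad A \<le> 1 / (2 * (1 + (xi_abs A)\<^sup>2 / 8)) *
              onorm (\<lambda>x. absop A x + absop (adj A) x)
       \<and> (numrad A)\<^sup>2 \<le> 1 / (2 * (1 + (xi_abs A)\<^sup>2 / 8)\<^sup>2) *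
              onorm (\<lambda>x. adj A (A x) + A (adj A x))"
proof -
  have bA: "bounded_clinear_op A" by (rule assms(1))
  define P where "P x = adj A (A x)" for x
  define Q where "Q x = A (adj A x)" for x
  have pP: "posop P" unfolding P_def[abs_def] by (rule AstarA_pos(1)[OF bA])
  have pQ: "posop Q" unfolding Q_def[abs_def] by (rule AAstar_pos(1)[OF bA])
  have bP: "bounded_clinear_op P" and bQ: "bounded_clinear_op Q" using pP pQ by (simp_all add: posop_def)
  define XA where "XA = absop A"
  define XB where "XB = absop (adj A)"
  have XA: "XA = opow P (1/2)" by (simp add: XA_def absop_def P_def[abs_def])
  have XB: "XB = opow Q (1/2)" by (simp add: XB_def absop_def Q_def[abs_def] adj_adj[OF bA])
  have pXA: "posop XA" unfolding XA by (rule opow_posop[OF pP]) simp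
  have pXB: "posop XB" unfolding XB by (rule opow_posop[OF pQ]) simp
  have bXA: "bounded_clinear_op XA" and bXB: "bounded_clinear_op XB"
    using pXA pXB by (simp_all add: posop_def)
  have bpow: "bounded_clinear_op (opow XA r)" "bounded_clinear_op (opow XB r)" if "0 < r" for r
    using opow_posop[OF pXA that] opow_posop[OF pXB that] by (simp_all add: posop_def)
  have PA: "Re (cinner (P x) x) = (norm (A x))\<^sup>2" for x
    using AstarA_pos(2)[OF bA, of x] by (simp add: P_def)
  have QA: "Re (cinner (Q x) x) = (norm (adj A x))\<^sup>2" for x
    using AAstar_pos(2)[OF bA, of x] by (simp add: Q_def)
  have hyp: "(norm (adj A x))\<^sup>2 \<le> (norm (A x))\<^sup>2" for x
  proof -
    have "0 \<le> Re (cinner (adj A (A x) - A (adj A x)) x)"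
      using assms(2) by (simp add: hyponormal_def pos_op_def)
    then show ?thesis using PA[of x] QA[of x] by (simp add: P_def Q_def cinner_diff_left)
  qed
  define a where "a = onorm A"
  have a0: "0 \<le> a" unfolding a_def by (rule bco_onorm_nonneg[OF bA])
  have onA: "onorm (adj A) = a" by (simp add: a_def onorm_adj[OF bA])
  have nr: "numrad A \<le> a" "0 \<le> numrad A" using numrad_le[OF bA] by (simp_all add: a_def)
  have K1: "0 \<le> onorm (\<lambda>x. opow XA r x + opow XB r x)" if "0 < r" for r
    by (rule bco_onorm_nonneg[OF bco_plus[OF bpow[OF that]]])
  have K2: "0 \<le> onorm (\<lambda>x. XA x + XB x)" by (rule bco_onorm_nonneg[OF bco_plus[OF bXA bXB]])
  have K3: "0 \<le> onorm (\<lambda>x. P x + Q x)" by (rule bco_onorm_nonneg[OF bco_plus[OF bP bQ]])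
  show ?thesis
  proof (cases "a = 0")
    case True
    then have n0: "numrad A = 0" using nr by simp
    have c1: "0 \<le> 1 / (2 * (1 + (xi_abs A)\<^sup>2 / 8) powr r)" for r by simp
    have c2: "0 \<le> 1 / (2 * (1 + (xi_abs A)\<^sup>2 / 8))" by (simp add: add_nonneg_nonneg)
    have c3: "0 \<le> 1 / (2 * (1 + (xi_abs A)\<^sup>2 / 8)\<^sup>2)" by simp
    show ?thesis
      using K1 K2 K3 c1 c2 c3 n0 unfolding XA_def[symmetric] XB_def[symmetric] P_def[symmetric] Q_def[symmetric]
      by (simp add: mult_nonneg_nonneg)
  next
    case False
    then have apos: "0 < a" using a0 by simp
    define M where "M = a\<^sup>2"
    have M0: "0 < M" using apos by (simp add: M_def)
    \<comment> \<open>Simultaneous approximate eigenvectors of A*A and AA*\<close>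
    have E1: "\<exists>x. norm x = 1 \<and> norm (P x - scaleR M x) \<le> \<eta> \<and> norm (Q x - scaleR M x) \<le> \<eta>"
      if eta: "0 < \<eta>" for \<eta>
    proof -
      define t where "t = \<eta>\<^sup>2 / (2 * a * M + 1)"
      have den: "0 < 2 * a * M + 1" using apos M0 by (simp add: add_pos_pos)
      have t0: "0 < t" using eta den by (simp add: t_def)
      have tM: "M * (2 * a * t) < \<eta>\<^sup>2" using eta den by (simp add: t_def field_simps)
      define c where "c = max 0 (a - t)"
      have c: "0 \<le> c" "c < onorm (adj A)" using apos t0 onA by (auto simp: c_def)
      obtain x where x: "norm x = 1" "c < norm (adj A x)" using bco_almost_norming[OF adj_bco(1)[OF bA] c] by blast
      have nAs: "norm (adj A x) \<le> a" using adj_bco(2)[OF bA, of x] x(1) by (simp add: a_def)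
      have nA: "norm (A x) \<le> a" using bco_norm[OF bA, of x] x(1) by (simp add: a_def)
      have gap: "M - (norm (adj A x))\<^sup>2 \<le> 2 * a * t"
      proof -
        have "a - norm (adj A x) \<le> t" using x(2) by (simp add: c_def)
        moreover have "M - (norm (adj A x))\<^sup>2 = (a - norm (adj A x)) * (a + norm (adj A x))"
          by (simp add: M_def power2_eq_square algebra_simps)
        moreover have "(a - norm (adj A x)) * (a + norm (adj A x)) \<le> t * (2 * a)"
          using nAs \<open>a - norm (adj A x) \<le> t\<close> a0 t0 by (intro mult_mono) auto
        ultimately show ?thesis by (simp add: mult.commute mult.left_commute)
      qed
      have gap2: "M - (norm (A x))\<^sup>2 \<le> 2 * a * t" using gap hyp[of x] by linarith
      have g1: "0 \<le> M - (norm (A x))\<^sup>2" using nA by (simp add: M_def power_mono)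
      have g2: "0 \<le> M - (norm (adj A x))\<^sup>2" using nAs by (simp add: M_def power_mono)
      have "(norm (P x - scaleR M x))\<^sup>2 \<le> M * (M - (norm (A x))\<^sup>2)"
        using approx_eig_AstarA[OF bA x(1)] by (simp add: P_def M_def a_def)
      also have "\<dots> \<le> M * (2 * a * t)" using gap2 M0 by (simp add: mult_left_mono)
      also have "\<dots> < \<eta>\<^sup>2" by (rule tM)
      finally have "(norm (P x - scaleR M x))\<^sup>2 < \<eta>\<^sup>2" .
      then have 1: "norm (P x - scaleR M x) \<le> \<eta>"
        using power_less_imp_less_base[of "norm (P x - scaleR M x)" 2 \<eta>] eta by simp
      have "(norm (Q x - scaleR M x))\<^sup>2 \<le> M * (M - (norm (adj A x))\<^sup>2)"
        using approx_eig_AstarA[OF adj_bco(1)[OF bA] x(1)] by (simp add: Q_def M_def onA adj_adj[OF bA])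
      also have "\<dots> \<le> M * (2 * a * t)" using gap M0 by (simp add: mult_left_mono)
      also have "\<dots> < \<eta>\<^sup>2" by (rule tM)
      finally have "(norm (Q x - scaleR M x))\<^sup>2 < \<eta>\<^sup>2" .
      then have 2: "norm (Q x - scaleR M x) \<le> \<eta>"
        using power_less_imp_less_base[of "norm (Q x - scaleR M x)" 2 \<eta>] eta by simp
      show ?thesis using x(1) 1 2 by blast
    qed
    have MP: "M \<le> onorm P" by (rule eig_onorm[OF bP _ less_imp_le[OF M0]]) (use E1 in blast)
    have MQ: "M \<le> onorm Q" by (rule eig_onorm[OF bQ _ less_imp_le[OF M0]]) (use E1 in blast)
    have Ma: "M powr (1/2) = a" using a0 by (simp add: M_def powr_half_sqrt)
    have E3: "\<exists>x. norm x = 1 \<and> norm (XA x - scaleR a x) \<le> e \<and> norm (XB x - scaleR a x) \<le> e"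
      if e: "0 < e" for e
      using pair_transfer[OF pP pQ _ less_imp_le[OF M0] MP MQ E1 e, of "1/2"]
      unfolding XA XB Ma by simp
    have aXA: "a \<le> onorm XA" by (rule eig_onorm[OF bXA _ a0]) (use E3 in blast)
    have aXB: "a \<le> onorm XB" by (rule eig_onorm[OF bXB _ a0]) (use E3 in blast)
    \<comment> \<open>xi = 0\<close>
    have LH: "Re (cinner (XB x) x) \<le> Re (cinner (XA x) x)" for x
    proof (rule loewner_half[OF pXA pXB])
      fix y
      have "(norm (XA y))\<^sup>2 = Re (cinner (XA (XA y)) y)"
        using pXA by (simp add: norm_sq_cinner posop_def sa_def)
      also have "\<dots> = (norm (A y))\<^sup>2" unfolding XA by (simp add: opow_half_sq[OF pP] PA)
      finally have 1: "(norm (XA y))\<^sup>2 = (norm (A y))\<^sup>2" .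
      have "(norm (XB y))\<^sup>2 = Re (cinner (XB (XB y)) y)"
        using pXB by (simp add: norm_sq_cinner posop_def sa_def)
      also have "\<dots> = (norm (adj A y))\<^sup>2" unfolding XB by (simp add: opow_half_sq[OF pQ] QA)
      finally have 2: "(norm (XB y))\<^sup>2 = (norm (adj A y))\<^sup>2" .
      show "(norm (XB y))\<^sup>2 \<le> (norm (XA y))\<^sup>2" using 1 2 hyp[of y] by simp
    qed
    define Xi where "Xi = {Re (cinner (XA x - XB x) x) / Re (cinner (XA x + XB x) x) | x.
                   norm x = 1 \<and> Re (cinner (XA x + XB x) x) \<noteq> 0}"
    have xiXi: "xi_abs A = Inf Xi" by (simp add: xi_abs_def Xi_def XA_def XB_def)
    have Xi0: "0 \<le> v" if vX: "v \<in> Xi" for v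
    proof -
      obtain x where v: "v = Re (cinner (XA x - XB x) x) / Re (cinner (XA x + XB x) x)" using vX by (auto simp: Xi_def)
      have "0 \<le> Re (cinner (XA x - XB x) x)" using LH[of x] by (simp add: cinner_diff_left)
      moreover have "0 \<le> Re (cinner (XA x + XB x) x)"
        using pXA pXB by (simp add: cinner_add_left posop_def add_nonneg_nonneg)
      ultimately show ?thesis using v by simp
    qed
    have small: "\<exists>v\<in>Xi. v \<le> 2 * e / a" if e: "0 < e" "e \<le> a / 2" for e
    proof -
      obtain x where x: "norm x = 1" "norm (XA x - scaleR a x) \<le> e" "norm (XB x - scaleR a x) \<le> e"
        using E3[OF e(1)] by blast
      have re: "\<bar>Re (cinner (U x) x) - a\<bar> \<le> e" if "norm (U x - scaleR a x) \<le> e" for U :: "'a \<Rightarrow> 'a"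
      proof -
        have "Re (cinner (U x - scaleR a x) x) = Re (cinner (U x) x) - a"
          using x(1) by (simp add: cinner_diff_left cinner_scaleR_left norm_sq_cinner[symmetric])
        moreover have "\<bar>Re (cinner (U x - scaleR a x) x)\<bar> \<le> norm (U x - scaleR a x)"
          using abs_Re_le_cmod[of "cinner (U x - scaleR a x) x"] cauchy_schwarz[of "U x - scaleR a x" x] x(1)
          by simp
        ultimately show ?thesis using that by simp
      qed
      have ra: "\<bar>Re (cinner (XA x) x) - a\<bar> \<le> e" by (rule re[of XA, OF x(2)])
      have rb: "\<bar>Re (cinner (XB x) x) - a\<bar> \<le> e" by (rule re[of XB, OF x(3)])
      define N where "N = Re (cinner (XA x - XB x) x)"
      define D where "D = Re (cinner (XA x + XB x) x)"
      have ND: "N = Re (cinner (XA x) x) - Re (cinner (XB x) x)" "D = Re (cinner (XA x) x) + Re (cinner (XB x) x)"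
        by (simp_all add: N_def D_def cinner_diff_left cinner_add_left)
      have Dge: "a \<le> D" using ra rb e ND(2) by (auto simp: abs_le_iff)
      have Nle: "N \<le> 2 * e" using ra rb ND(1) by (auto simp: abs_le_iff)
      have N0: "0 \<le> N" using LH[of x] ND(1) by simp
      have Dpos: "0 < D" using Dge apos by linarith
      have "N / D \<le> 2 * e / D" using Nle Dpos by (simp add: divide_right_mono)
      also have "\<dots> \<le> 2 * e / a" using Dge apos e by (intro divide_left_mono) auto
      finally have "N / D \<le> 2 * e / a" .
      moreover have "N / D \<in> Xi" using x(1) Dpos by (auto simp: Xi_def N_def D_def)
      ultimately show ?thesis by blast
    qed
    have bddXi: "bdd_below Xi" using Xi0 by (intro bdd_belowI) blast
    have neXi: "Xi \<noteq> {}" using small[of "a/2"] apos by auto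
    have xi0: "xi_abs A = 0"
    proof -
      have ge: "0 \<le> Inf Xi" by (rule cInf_greatest[OF neXi Xi0])
      have le: "Inf Xi \<le> 0"
      proof (rule ccontr)
        assume "\<not> Inf Xi \<le> 0"
        then have xp: "0 < Inf Xi" by simp
        define e where "e = min (a / 2) (Inf Xi * a / 4)"
        have e: "0 < e" "e \<le> a / 2" using apos xp by (auto simp: e_def)
        obtain v where v: "v \<in> Xi" "v \<le> 2 * e / a" using small[OF e] by blast
        have "Inf Xi \<le> v" by (rule cInf_lower[OF v(1) bddXi])
        also have "\<dots> \<le> 2 * e / a" by (rule v(2))
        also have "\<dots> \<le> 2 * (Inf Xi * a / 4) / a"
          using apos by (intro divide_right_mono mult_left_mono) (auto simp: e_def)
        also have "\<dots> = Inf Xi / 2" using apos by simp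
        finally show False using xp by simp
      qed
      show ?thesis using ge le xiXi by simp
    qed
    have part1: "numrad A powr r \<le> 1 / 2 * onorm (\<lambda>x. opow XA r x + opow XB r x)"
      if r: "1 \<le> r" "r \<le> 2" for r
    proof -
      have r0: "0 < r" using r by simp
      have "2 * a powr r \<le> onorm (\<lambda>x. opow XA r x + opow XB r x)"
      proof (rule lower_onorm[OF bpow[OF r0]])
        fix e :: real assume "0 < e"
        then show "\<exists>x. norm x = 1 \<and> norm (opow XA r x - scaleR (a powr r) x) \<le> e \<and> norm (opow XB r x - scaleR (a powr r) x) \<le> e"
          using pair_transfer[OF pXA pXB r0 a0 aXA aXB E3, of e] by simp
      qed simp
      moreover have "numrad A powr r \<le> a powr r" using nr r0 by (intro powr_mono2) auto
      ultimately show ?thesis by simp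
    qed
    have part2: "numrad A \<le> 1 / 2 * onorm (\<lambda>x. XA x + XB x)"
    proof -
      have "2 * a \<le> onorm (\<lambda>x. XA x + XB x)" by (rule lower_onorm[OF bXA bXB E3 a0])
      then show ?thesis using nr by simp
    qed
    have part3: "(numrad A)\<^sup>2 \<le> 1 / 2 * onorm (\<lambda>x. P x + Q x)"
    proof -
      have "2 * M \<le> onorm (\<lambda>x. P x + Q x)" by (rule lower_onorm[OF bP bQ E1 less_imp_le[OF M0]])
      moreover have "(numrad A)\<^sup>2 \<le> M" using nr by (simp add: M_def power_mono)
      ultimately show ?thesis by simp
    qed
    show ?thesis
      using part1 part2 part3 xi0
      unfolding XA_def[symmetric] XB_def[symmetric] P_def[symmetric] Q_def[symmetric]
      by simp
  qed
qed

end
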